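(* For $\chi\in\mathcal{A}$ let $R_i^\chi$ ($i=1,2,3$) be the $\mathcal{S}^*_{car}$-radius of $\mathcal{F}_i^\chi$. Then: (a) $\chi(z)=z$: $R_1^\chi=1/(4+\sqrt{17})$, $R_2^\chi=1/(3+2\sqrt3)$, $R_3^\chi=1/(2+\sqrt5)$. (b) $\chi(z)=z/(1+z)$: $R_1^\chi=5-2\sqrt6$, $R_2^\chi=\sqrt{17}-4$, $R_3^\chi=3-2\sqrt2$. (c) $\chi(z)=z/(1-z^2)$: $R_1^\chi=r_1$, $R_2^\chi=r_2$, $R_3^\chi=r_3$, where $r_1,r_2,r_3$ are the smallest positive real roots in $(0,1)$ of $3r^4-8r^3-4r^2-8r+1=0$, $r^4-6r^3-6r^2-6r+1=0$ and $3r^4-4r^3-4r^2-4r+1=0$ respectively ($r_1\approx0.11667$, $r_2\approx0.14326$, $r_3\approx0.20213$). (d) $\chi(z)=z/(1-z)^2$: $R_1^\chi=(6-\sqrt{33})/3$, $R_2^\chi=5-2\sqrt6$, $R_3^\chi=(4-\sqrt{13})/3$. (e) $\chi(z)=z+z^2/2$: $R_1^\chi=s_1$, $R_2^\chi=s_2$, $R_3^\chi=s_3$, where $s_1,s_2,s_3$ are the smallest positive real roots in $(0,1)$ of $3r^3+6r^2-19r+2=0$, $5r^3-15r+2=0$ and $3r^3+2r^2-11r+2=0$ respectively ($s_1\approx0.10924$, $s_2\approx0.13414$, $s_3\approx0.19028$). All estimates are sharp.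
   Context: $\mathbb{D}=\{z:|z|<1\}$; $\mathcal{A}$ is the class of analytic $f$ on $\mathbb{D}$ with $f(0)=0$, $f'(0)=1$. $F\prec G$ means $F=G\circ w$ for an analytic $w:\mathbb{D}\to\mathbb{D}$ with $w(0)=0$. $\mathcal{S}^*_{car}$ is the class of $f\in\mathcal{A}$ with $zf'(z)/f(z)\prec 1+z+z^2/2$. For $\chi\in\mathcal{A}$: $\mathcal{F}_1^\chi$ is the class of $f\in\mathcal{A}$ such that $\operatorname{Re}(f(z)/g(z))>0$ on $\mathbb{D}$ for some $g\in\mathcal{A}$ with $\operatorname{Re}(g(z)/\chi(z))>0$ on $\mathbb{D}$; $\mathcal{F}_2^\chi$ is the class of $f\in\mathcal{A}$ such that $|f(z)/g(z)-1|<1$ on $\mathbb{D}$ for some $g\in\mathcal{A}$ with $\operatorname{Re}(g(z)/\chi(z))>0$ on $\mathbb{D}$; $\mathcal{F}_3^\chi$ is the class of $f\in\mathcal{A}$ with $\operatorname{Re}(f(z)/\chi(z))>0$ on $\mathbb{D}$. For a class $\mathcal{F}\subseteq\mathcal{A}$, the $\mathcal{S}^*_{car}$-radius of $\mathcal{F}$ is the supremum of all $r\in(0,1]$ such that $f(rz)/r\in\mathcal{S}^*_{car}$ for every $f\in\mathcal{F}$. *)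

theory Defs
  imports "HOL-Analysis.Analysis"
begin

definition classA :: "(complex \<Rightarrow> complex) set" where
  "classA = {f. f holomorphic_on ball 0 1 \<and> f 0 = 0 \<and> deriv f 0 = 1}"

definition subord :: "(complex \<Rightarrow> complex) \<Rightarrow> (complex \<Rightarrow> complex) \<Rightarrow> bool" where
  "subord F G \<longleftrightarrow> (\<exists>w. w holomorphic_on ball 0 1 \<and> w ` ball 0 1 \<subseteq> ball 0 1 \<and> w 0 = 0
      \<and> (\<forall>z\<in>ball 0 1. F z = G (w z)))"

definition logderiv_quot :: "(complex \<Rightarrow> complex) \<Rightarrow> complex \<Rightarrow> complex" where
  "logderiv_quot f z = (if z = 0 then 1 else z * deriv f z / f z)"

definition SstarCar :: "(complex \<Rightarrow> complex) set" where
  "SstarCar = {f. f \<in> classA \<and> (\<forall>z\<in>ball 0 1. z \<noteq> 0 \<longrightarrow> f z \<noteq> 0)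
      \<and> subord (logderiv_quot f) (\<lambda>z. 1 + z + z^2/2)}"

text \<open>Quotient conditions are imposed on the punctured disc; at z = 0 the
  quotients have the removable value 1, which satisfies them automatically.\<close>
definition F3 :: "(complex \<Rightarrow> complex) \<Rightarrow> (complex \<Rightarrow> complex) set" where
  "F3 chi = {f. f \<in> classA \<and> (\<forall>z\<in>ball 0 1. z \<noteq> 0 \<longrightarrow> Re (f z / chi z) > 0)}"

definition F1 :: "(complex \<Rightarrow> complex) \<Rightarrow> (complex \<Rightarrow> complex) set" where
  "F1 chi = {f. f \<in> classA \<and> (\<exists>g\<in>F3 chi. \<forall>z\<in>ball 0 1. z \<noteq> 0 \<longrightarrow> Re (f z / g z) > 0)}"

definition F2 :: "(complex \<Rightarrow> complex) \<Rightarrow> (complex \<Rightarrow> complex) set" where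
  "F2 chi = {f. f \<in> classA \<and> (\<exists>g\<in>F3 chi. \<forall>z\<in>ball 0 1. z \<noteq> 0 \<longrightarrow> cmod (f z / g z - 1) < 1)}"

definition car_radius :: "(complex \<Rightarrow> complex) set \<Rightarrow> real" where
  "car_radius F = Sup {r. 0 < r \<and> r \<le> 1 \<and>
      (\<forall>f\<in>F. (\<lambda>z. f (complex_of_real r * z) / complex_of_real r) \<in> SstarCar)}"

end

theory Submission
  imports Defs "HOL-Complex_Analysis.Complex_Analysis"
begin

lemma schwarz_pick:
  assumes holo: "w holomorphic_on ball 0 1"
    and maps: "\<And>z. norm z < 1 \<Longrightarrow> norm (w z) < 1"
    and z0: "norm z0 < 1"
  shows "norm (deriv w z0) * (1 - norm z0 ^ 2) \<le> 1 - norm (w z0) ^ 2"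
proof -
  define a where "a = w z0"
  have a1: "norm a < 1" using maps z0 by (simp add: a_def)
  define M1 where "M1 = (\<lambda>\<zeta>::complex. (\<zeta> + z0) / (1 + cnj z0 * \<zeta>))"
  define M2 where "M2 = (\<lambda>v::complex. (v - a) / (1 - cnj a * v))"
  have M1eq: "M1 = Moebius_function 0 (-z0)"
    by (rule ext) (simp add: M1_def Moebius_function_def)
  have M2eq: "M2 = Moebius_function 0 a"
    by (rule ext) (simp add: M2_def Moebius_function_def)
  have M1h: "M1 holomorphic_on ball 0 1" unfolding M1eq
    by (rule Moebius_function_holomorphic) (use z0 in simp)
  have M2h: "M2 holomorphic_on ball 0 1" unfolding M2eq
    by (rule Moebius_function_holomorphic) (use a1 in simp)
  have M1b: "norm (M1 z) < 1" if "norm z < 1" for z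
    unfolding M1eq by (rule Moebius_function_norm_lt_1) (use z0 that in simp_all)
  have M2b: "norm (M2 z) < 1" if "norm z < 1" for z
    unfolding M2eq by (rule Moebius_function_norm_lt_1) (use a1 that in simp_all)
  define G where "G = M2 \<circ> w \<circ> M1"
  have Gh: "G holomorphic_on ball 0 1"
    unfolding G_def
    apply (rule holomorphic_on_compose_gen[OF M1h])
     apply (rule holomorphic_on_compose_gen[OF holo M2h])
    using M1b maps by auto
  have G0: "G 0 = 0" by (simp add: G_def M1_def M2_def a_def)
  have Gb: "norm (G z) < 1" if "norm z < 1" for z
    using M1b M2b maps that by (simp add: G_def)
  have "norm (deriv G 0) \<le> 1"
    using Schwarz_Lemma(2)[OF Gh G0 Gb, of 0] by simp
  have nz0: "1 + cnj z0 * 0 \<noteq> 0" by simp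
  have d1: "(M1 has_field_derivative (1 - norm z0 ^ 2)) (at 0)"
  proof -
    have "(M1 has_field_derivative ((1 * (1 + cnj z0 * 0) - (0 + z0) * (cnj z0 * 1)) / ((1 + cnj z0 * 0) * (1 + cnj z0 * 0)))) (at 0)"
      unfolding M1_def
      by (rule DERIV_divide) (auto intro!: derivative_eq_intros)
    moreover have "(1 * (1 + cnj z0 * 0) - (0 + z0) * (cnj z0 * 1)) / ((1 + cnj z0 * 0) * (1 + cnj z0 * 0)) = 1 - (norm z0 ^ 2)"
      using complex_norm_square[of z0] by simp
    ultimately show ?thesis by simp
  qed
  have M10: "M1 0 = z0" by (simp add: M1_def)
  have d2: "(w has_field_derivative deriv w z0) (at z0)"
    using holo z0 by (meson DERIV_deriv_iff_field_differentiable holomorphic_on_imp_differentiable_at mem_ball_0 open_ball)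
  have na: "1 - cnj a * a \<noteq> 0"
  proof
    assume "1 - cnj a * a = 0"
    then have "of_real ((norm a)^2) = (1::complex)" using complex_norm_square[of a] by (simp add: mult.commute)
    then have "(norm a)^2 = 1" using of_real_eq_1_iff by blast
    then show False using a1 by (simp add: abs_square_eq_1)
  qed
  have d3: "(M2 has_field_derivative 1 / (1 - norm a ^ 2)) (at a)"
  proof -
    have "(M2 has_field_derivative ((1 - 0) * (1 - cnj a * a) - (a - a) * (0 - cnj a * 1)) / ((1 - cnj a * a) * (1 - cnj a * a))) (at a)"
      unfolding M2_def
      by (rule DERIV_divide) (use na in \<open>auto intro!: derivative_eq_intros\<close>)
    moreover have "((1 - 0) * (1 - cnj a * a) - (a - a) * (0 - cnj a * 1)) / ((1 - cnj a * a) * (1 - cnj a * a)) = 1 / (1 - norm a ^ 2)"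
      using na complex_norm_square[of a] by (simp add: mult.commute)
    ultimately show ?thesis by simp
  qed
  have dG: "(G has_field_derivative (1 / (1 - norm a ^ 2)) * deriv w z0 * (1 - norm z0 ^ 2)) (at 0)"
  proof -
    have d21: "((w \<circ> M1) has_field_derivative deriv w z0 * (1 - norm z0^2)) (at 0)"
      using DERIV_chain[OF d2[folded M10] d1] by (simp add: M10)
    have d3': "(M2 has_field_derivative 1 / (1 - norm a ^ 2)) (at ((w \<circ> M1) 0))"
      using d3 by (simp add: a_def M10)
    show ?thesis unfolding G_def
      using DERIV_chain[OF d3' d21] by (simp add: mult.assoc o_def)
  qed
  have e1: "deriv G 0 = (1 / (1 - norm a ^ 2)) * deriv w z0 * (1 - norm z0 ^ 2)"
    by (rule DERIV_imp_deriv[OF dG])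
  have e2: "(1 / (1 - norm a ^ 2)) * deriv w z0 * (1 - norm z0 ^ 2) = complex_of_real (1 / (1 - norm a ^ 2)) * deriv w z0 * complex_of_real (1 - norm z0 ^ 2)"
    by simp
  have eqG: "deriv G 0 = complex_of_real (1 / (1 - norm a ^ 2)) * deriv w z0 * complex_of_real (1 - norm z0 ^ 2)"
    using e1 e2 by (rule trans)
  have "norm (complex_of_real (1 / (1 - norm a ^ 2)) * deriv w z0 * complex_of_real (1 - norm z0 ^ 2)) \<le> 1"
    using \<open>norm (deriv G 0) \<le> 1\<close> unfolding eqG .
  then have le: "\<bar>1 / (1 - norm a ^ 2)\<bar> * norm (deriv w z0) * \<bar>1 - norm z0 ^ 2\<bar> \<le> 1"
    by (simp only: norm_mult norm_of_real)
  have p1: "1 - norm a ^ 2 > 0" and p2: "1 - norm z0 ^ 2 > 0"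
    using a1 z0 by (simp_all add: abs_square_less_1)
  from le p1 p2 have "norm (deriv w z0) * (1 - norm z0 ^ 2) / (1 - norm a ^ 2) \<le> 1"
    by (simp add: abs_of_pos)
  with p1 show ?thesis by (simp add: a_def divide_le_eq)
qed

lemma hol_deriv_at:
  assumes "f holomorphic_on ball 0 1" "norm z < 1"
  shows "(f has_field_derivative deriv f z) (at z)"
  using assms by (meson DERIV_deriv_iff_field_differentiable holomorphic_on_imp_differentiable_at mem_ball_0 open_ball)

lemma cara_bound:
  assumes holo: "p holomorphic_on ball 0 1"
    and pos: "\<And>z. norm z < 1 \<Longrightarrow> Re (p z) > 0"
    and z: "norm z < 1"
  shows "norm (z * deriv p z / p z) \<le> 2 * norm z / (1 - norm z ^ 2)"
proof -
  have nz1: "p u + 1 \<noteq> 0" if "norm u < 1" for u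
  proof
    assume "p u + 1 = 0"
    then have "Re (p u) = -1" by (metis add_eq_0_iff minus_complex.simps(1) one_complex.simps(1) uminus_complex.sel(1) add.commute eq_neg_iff_add_eq_0)
    with pos[OF that] show False by simp
  qed
  define w where "w = (\<lambda>u. (p u - 1) / (p u + 1))"
  have wh: "w holomorphic_on ball 0 1"
    unfolding w_def by (intro holomorphic_intros holo) (use nz1 in auto)
  have sq: "norm (p u + 1) ^ 2 - norm (p u - 1) ^ 2 = 4 * Re (p u)" for u
    unfolding cmod_power2 by (simp add: power2_eq_square algebra_simps)
  have wb: "norm (w u) < 1" if "norm u < 1" for u
  proof -
    have "norm (p u - 1) ^ 2 < norm (p u + 1) ^ 2" using sq[of u] pos[OF that] by linarith
    then have "norm (p u - 1) < norm (p u + 1)" using power_less_imp_less_base by fastforce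
    then show ?thesis using nz1[OF that] by (simp add: w_def norm_divide divide_less_eq)
  qed
  have dp: "(p has_field_derivative deriv p z) (at z)" by (rule hol_deriv_at[OF holo z])
  have "(w has_field_derivative (deriv p z * (p z + 1) - (p z - 1) * deriv p z) / ((p z + 1) * (p z + 1))) (at z)"
    unfolding w_def
    by (rule DERIV_divide) (use dp nz1[OF z] in \<open>auto intro!: derivative_eq_intros\<close>)
  then have dw: "deriv w z = 2 * deriv p z / (p z + 1) ^ 2"
    by (simp add: DERIV_imp_deriv algebra_simps power2_eq_square)
  have SP: "norm (deriv w z) * (1 - norm z ^ 2) \<le> 1 - norm (w z) ^ 2"
    by (rule schwarz_pick[OF wh wb z])
  have n1: "norm (p z + 1) > 0" using nz1[OF z] by simp
  have wz2: "norm (w z)^2 = norm (p z - 1)^2 / norm (p z + 1)^2" by (simp add: w_def norm_divide power_divide)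
  have "1 - norm (w z) ^ 2 = (norm (p z + 1)^2 - norm (p z - 1)^2) / norm (p z + 1) ^ 2"
    unfolding wz2 using n1 by (simp add: diff_divide_distrib)
  also have "\<dots> = 4 * Re (p z) / norm (p z + 1) ^ 2" by (simp only: sq)
  finally have "1 - norm (w z) ^ 2 = 4 * Re (p z) / norm (p z + 1) ^ 2" .
  with SP dw have "(2 * norm (deriv p z) * (1 - norm z ^ 2)) / norm (p z + 1) ^ 2 \<le> (4 * Re (p z)) / norm (p z + 1) ^ 2"
    by (simp add: norm_divide norm_mult norm_power)
  then have "2 * norm (deriv p z) * (1 - norm z ^ 2) \<le> 4 * Re (p z)"
    using n1 by (simp add: divide_le_cancel)
  also have "Re (p z) \<le> norm (p z)" by (rule complex_Re_le_cmod)
  finally have A: "norm (deriv p z) * (1 - norm z ^ 2) \<le> 2 * norm (p z)" by simp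
  have pz: "norm (p z) > 0" using pos[OF z] by (metis complex_Re_le_cmod less_le_trans)
  have d: "1 - norm z ^ 2 > 0" using z by (simp add: abs_square_less_1)
  have "norm (z * deriv p z / p z) = norm z * (norm (deriv p z) * (1 - norm z ^ 2)) / (norm (p z) * (1 - norm z ^ 2))"
    using d pz by (simp add: norm_mult norm_divide)
  also have "\<dots> \<le> norm z * (2 * norm (p z)) / (norm (p z) * (1 - norm z ^ 2))"
    using A d pz by (intro divide_right_mono mult_left_mono) auto
  also have "\<dots> = 2 * norm z / (1 - norm z ^ 2)" using pz by simp
  finally show ?thesis .
qed

lemma f2_bound:
  assumes holo: "h holomorphic_on ball 0 1"
    and b: "\<And>z. norm z < 1 \<Longrightarrow> norm (h z - 1) < 1"
    and h0: "h 0 = 1"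
    and z: "norm z < 1"
  shows "norm (z * deriv h z / h z) \<le> norm z / (1 - norm z)"
proof -
  define w where "w = (\<lambda>u. h u - 1)"
  have wh: "w holomorphic_on ball 0 1" unfolding w_def by (intro holomorphic_intros holo)
  have wb: "norm (w u) < 1" if "norm u < 1" for u using b[OF that] by (simp add: w_def)
  have w0: "w 0 = 0" by (simp add: w_def h0)
  have wz: "norm (w z) \<le> norm z" using Schwarz_Lemma(1)[OF wh w0 wb z] .
  have dp: "(h has_field_derivative deriv h z) (at z)" by (rule hol_deriv_at[OF holo z])
  have "(w has_field_derivative deriv h z) (at z)"
    unfolding w_def using dp by (auto intro!: derivative_eq_intros)
  then have dw: "deriv w z = deriv h z" by (rule DERIV_imp_deriv)
  have SP: "norm (deriv h z) * (1 - norm z ^ 2) \<le> 1 - norm (w z) ^ 2"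
    using schwarz_pick[OF wh wb z] dw by simp
  have wl: "norm (w z) < 1" using wb[OF z] .
  have hz: "norm (h z) \<ge> 1 - norm (w z)"
    using norm_triangle_ineq2[of 1 "- w z"] by (simp add: w_def norm_minus_commute)
  have hpos: "1 - norm (w z) > 0" using wl by simp
  have d: "1 - norm z ^ 2 > 0" using z by (simp add: abs_square_less_1)
  have d1: "1 - norm z > 0" using z by simp
  have "norm (deriv h z) * (1 - norm z ^ 2) \<le> (1 - norm (w z)) * (1 + norm (w z))"
    using SP by (simp add: power2_eq_square algebra_simps)
  also have "\<dots> \<le> (1 - norm (w z)) * (1 + norm z)"
    using wz hpos by (intro mult_left_mono) auto
  finally have A: "norm (deriv h z) * (1 - norm z) \<le> 1 - norm (w z)"
  proof -
    assume "norm (deriv h z) * (1 - norm z ^ 2) \<le> (1 - norm (w z)) * (1 + norm z)"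
    moreover have "1 - norm z ^ 2 = (1 - norm z) * (1 + norm z)" by (simp add: power2_eq_square algebra_simps)
    ultimately have "(norm (deriv h z) * (1 - norm z)) * (1 + norm z) \<le> (1 - norm (w z)) * (1 + norm z)"
      by (simp add: mult.assoc)
    then show ?thesis by (simp add: mult_le_cancel_right_pos add_pos_nonneg)
  qed
  have hp: "norm (h z) > 0" using hz hpos by linarith
  have "norm (z * deriv h z / h z) = norm z * (norm (deriv h z) * (1 - norm z)) / (norm (h z) * (1 - norm z))"
    using d1 hp by (simp add: norm_mult norm_divide)
  also have "\<dots> \<le> norm z * norm (h z) / (norm (h z) * (1 - norm z))"
    using A hz d1 hp by (intro divide_right_mono mult_left_mono) auto
  also have "\<dots> = norm z / (1 - norm z)" using hp by simp
  finally show ?thesis .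
qed

definition hr :: "(complex \<Rightarrow> complex) \<Rightarrow> real \<Rightarrow> complex \<Rightarrow> complex" where
  "hr f r = (\<lambda>z. f (complex_of_real r * z) / complex_of_real r)"

lemma kf_exists:
  assumes "f \<in> classA"
  shows "(\<lambda>z. if z = 0 then 1 else f z / z) holomorphic_on ball 0 1"
    and "\<And>z. f z = z * (if z = 0 then 1 else f z / z)"
proof -
  have fh: "f holomorphic_on ball 0 1" and f0: "f 0 = 0" and d: "deriv f 0 = 1"
    using assms by (auto simp: classA_def)
  have "(\<lambda>z. if z = 0 then deriv f 0 else (f z - f 0) / (z - 0)) holomorphic_on ball 0 1"
    by (rule pole_lemma_open[OF fh]) simp
  moreover have "(\<lambda>z. if z = 0 then deriv f 0 else (f z - f 0) / (z - 0)) = (\<lambda>z. if z = 0 then 1 else f z / z)"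
    by (rule ext) (simp add: f0 d)
  ultimately show "(\<lambda>z. if z = 0 then 1 else f z / z) holomorphic_on ball 0 1"
    by simp
  show "\<And>z. f z = z * (if z = 0 then 1 else f z / z)" using f0 by auto
qed

lemma mul_classA:
  assumes kh: "k holomorphic_on ball 0 1" and k0: "k 0 = 1"
  shows "(\<lambda>z. z * k z) \<in> classA"
proof -
  have "((\<lambda>z. z * k z) has_field_derivative (1 * k 0 + 0 * deriv k 0)) (at 0)"
    using DERIV_mult[OF DERIV_ident hol_deriv_at[OF kh, of 0]] by simp
  then have "deriv (\<lambda>z. z * k z) 0 = 1" using k0 by (simp add: DERIV_imp_deriv)
  moreover have "(\<lambda>z. z * k z) holomorphic_on ball 0 1" by (intro holomorphic_intros kh)
  ultimately show ?thesis by (simp add: classA_def)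
qed

lemma hr_classA:
  assumes f: "f \<in> classA" and r: "0 < r" "r \<le> 1"
  shows "hr f r \<in> classA"
proof -
  have fh: "f holomorphic_on ball 0 1" and f0: "f 0 = 0" and d: "deriv f 0 = 1"
    using f by (auto simp: classA_def)
  have sub: "(\<lambda>z. complex_of_real r * z) ` ball 0 1 \<subseteq> ball 0 1"
  proof
    fix y assume "y \<in> (\<lambda>z. complex_of_real r * z) ` ball 0 1"
    then obtain z where "z \<in> ball 0 1" "y = complex_of_real r * z" by blast
    then have "norm z < 1" and yz: "y = complex_of_real r * z" by simp_all
    have "norm y = r * norm z" using r yz by (simp add: norm_mult)
    also have "\<dots> \<le> 1 * norm z" using r by (intro mult_right_mono) auto
    also have "\<dots> < 1" using \<open>norm z < 1\<close> by simp
    finally show "y \<in> ball 0 1" by simp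
  qed
  have hh: "hr f r holomorphic_on ball 0 1"
    unfolding hr_def
    apply (rule holomorphic_on_divide)
      apply (rule holomorphic_on_compose_gen[OF _ fh sub, unfolded o_def])
      apply (intro holomorphic_intros)
    using r by auto
  have df: "(f has_field_derivative 1) (at 0)" using hol_deriv_at[OF fh, of 0] d by simp
  have "((\<lambda>z. complex_of_real r * z) has_field_derivative complex_of_real r) (at 0)"
    by (auto intro!: derivative_eq_intros)
  from DERIV_chain2[OF _ this, of f 1] df
  have "((\<lambda>z. f (complex_of_real r * z)) has_field_derivative complex_of_real r) (at 0)" by simp
  then have "(hr f r has_field_derivative complex_of_real r / complex_of_real r) (at 0)"
    unfolding hr_def by (rule DERIV_cdivide)
  then have "deriv (hr f r) 0 = 1" using r by (simp add: DERIV_imp_deriv)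
  with hh f0 show ?thesis by (simp add: classA_def hr_def)
qed

lemma norm_rz:
  assumes "0 < r" "r \<le> 1" "norm z < 1"
  shows "norm (complex_of_real r * z) < 1" "norm (complex_of_real r * z) = r * norm z"
proof -
  show "norm (complex_of_real r * z) = r * norm z" using assms by (simp add: norm_mult)
  also have "\<dots> \<le> 1 * norm z" using assms by (intro mult_right_mono) auto
  also have "\<dots> < 1" using assms by simp
  finally show "norm (complex_of_real r * z) < 1" .
qed

lemma logderiv_formula:
  assumes kh: "k holomorphic_on ball 0 1" and knz: "\<And>z. norm z < 1 \<Longrightarrow> k z \<noteq> 0"
    and feq: "\<And>z. norm z < 1 \<Longrightarrow> f z = z * k z"
    and r: "0 < r" "r \<le> 1" and z: "norm z < 1"
  shows "logderiv_quot (hr f r) z = 1 + (complex_of_real r * z) * deriv k (complex_of_real r * z) / k (complex_of_real r * z)"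
proof (cases "z = 0")
  case True then show ?thesis by (simp add: logderiv_quot_def)
next
  case False
  define \<zeta> where "\<zeta> = complex_of_real r * z"
  have \<zeta>1: "norm \<zeta> < 1" using norm_rz[OF r z] by (simp add: \<zeta>_def)
  have eq: "hr f r u = u * k (complex_of_real r * u)" if "u \<in> ball 0 1" for u
    using feq[OF norm_rz(1)[OF r, of u]] that r by (simp add: hr_def)
  have dk: "(k has_field_derivative deriv k \<zeta>) (at \<zeta>)" by (rule hol_deriv_at[OF kh \<zeta>1])
  have "((\<lambda>u. complex_of_real r * u) has_field_derivative complex_of_real r) (at z)"
    by (auto intro!: derivative_eq_intros)
  from DERIV_chain2[OF dk[unfolded \<zeta>_def] this]
  have dk2: "((\<lambda>u. k (complex_of_real r * u)) has_field_derivative deriv k \<zeta> * complex_of_real r) (at z)"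
    by (simp add: \<zeta>_def)
  have "((\<lambda>u. u * k (complex_of_real r * u)) has_field_derivative (1 * k \<zeta> + z * (deriv k \<zeta> * complex_of_real r))) (at z)"
    using DERIV_mult[OF DERIV_ident dk2] by (simp add: \<zeta>_def algebra_simps)
  then have "(hr f r has_field_derivative (1 * k \<zeta> + z * (deriv k \<zeta> * complex_of_real r))) (at z)"
    by (rule has_field_derivative_transform_within_open[where S = "ball 0 1"]) (use z eq in auto)
  then have dh: "deriv (hr f r) z = k \<zeta> + z * (deriv k \<zeta> * complex_of_real r)"
    by (simp add: DERIV_imp_deriv)
  have hz: "hr f r z = z * k \<zeta>" using eq z by (simp add: \<zeta>_def)
  have knz': "k \<zeta> \<noteq> 0" using knz[OF \<zeta>1] .
  have "logderiv_quot (hr f r) z = 1 + \<zeta> * deriv k \<zeta> / k \<zeta>"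
    unfolding logderiv_quot_def using False knz'
    by (simp add: dh hz field_simps \<zeta>_def)
  then show ?thesis by (simp add: \<zeta>_def)
qed

lemma region_real:
  fixes a b :: real
  assumes a: "a \<ge> 0" and h: "(a^2 - b^2 - 2)^2 + (2*a*b)^2 < 4"
  shows "(a - 1)^2 + b^2 < 1"
proof -
  have e: "(a^2 - b^2 - 2)^2 + (2*a*b)^2 = (a^2 + b^2)^2 - 4*(a^2 - b^2) + 4"
    by (simp add: power2_eq_square algebra_simps)
  have "(a^2 + b^2)^2 < 4*(a^2 - b^2)" using h e by linarith
  also have "\<dots> \<le> (2*a)^2" by (simp add: power2_eq_square)
  finally have "(a^2 + b^2)^2 < (2*a)^2" .
  then have "a^2 + b^2 < 2*a" by (rule power_less_imp_less_base) (use a in simp)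
  then show ?thesis by (simp add: power2_eq_square algebra_simps)
qed

lemma region:
  assumes "norm (W - 2) < 2" shows "norm (csqrt W - 1) < 1"
proof -
  define u where "u = csqrt W"
  have a: "Re u \<ge> 0" using csqrt_principal[of W] by (auto simp: u_def)
  have W: "W = u^2" by (simp add: u_def)
  have ReW: "Re W = (Re u)^2 - (Im u)^2" and ImW: "Im W = 2 * Re u * Im u"
    by (simp_all add: W power2_eq_square)
  have "norm (W - 2)^2 < 2^2" using assms by (intro power_strict_mono) auto
  then have "(Re W - 2)^2 + (Im W)^2 < 4" by (simp add: cmod_power2)
  then have "((Re u)^2 - (Im u)^2 - 2)^2 + (2 * Re u * Im u)^2 < 4" by (simp add: ReW ImW)
  from region_real[OF a this] have "norm (u - 1)^2 < 1^2" by (simp add: cmod_power2)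
  then show ?thesis unfolding u_def[symmetric] by (rule power_less_imp_less_base) simp
qed

lemma sub_from_disc:
  assumes Fh: "F holomorphic_on ball 0 1" and F0: "F 0 = 1"
    and Fb: "\<And>z. norm z < 1 \<Longrightarrow> norm (F z - 3/2) < 1"
  shows "subord F (\<lambda>z. 1 + z + z^2/2)"
proof -
  define w where "w = (\<lambda>z. csqrt (2 * F z - 1) - 1)"
  have nb: "norm ((2 * F z - 1) - 2) < 2" if "norm z < 1" for z
  proof -
    have e: "(2 * F z - 1) - 2 = 2 * (F z - 3/2)" by (simp add: algebra_simps)
    have "norm (2 * (F z - 3/2)) = 2 * norm (F z - 3/2)" by (simp only: norm_mult) simp
    then have "norm (2 * (F z - 3/2)) < 2" using Fb[OF that] by simp
    then show ?thesis by (simp only: e)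
  qed
  have pos: "Re (2 * F z - 1) > 0" if "norm z < 1" for z
  proof -
    have "\<bar>Re ((2 * F z - 1) - 2)\<bar> < 2" using nb[OF that] abs_Re_le_cmod le_less_trans by blast
    then show ?thesis by simp
  qed
  have wh: "w holomorphic_on ball 0 1"
    unfolding w_def
  proof (intro holomorphic_intros Fh)
    fix z :: complex assume "z \<in> ball 0 1"
    then have "Re (2 * F z - 1) > 0" using pos by simp
    then show "2 * F z - 1 \<notin> \<real>\<^sub>\<le>\<^sub>0" by (simp add: complex_nonpos_Reals_iff)
  qed
  have wb: "w ` ball 0 1 \<subseteq> ball 0 1"
    using region[OF nb] by (auto simp: w_def)
  have w0: "w 0 = 0" by (simp add: w_def F0)
  have "F z = 1 + w z + (w z)^2 / 2" for z
  proof -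
    define u where "u = csqrt (2 * F z - 1)"
    have hu: "u^2 = 2 * F z - 1" by (simp add: u_def)
    have "(u - 1)^2 = u^2 - 2*u + 1" by (simp add: power2_diff)
    also have "\<dots> = 2 * (F z - u)" using hu by (simp add: algebra_simps)
    finally have e: "(u - 1)^2 = 2 * (F z - u)" .
    have h2: "(u - 1)^2 / 2 = F z - u" unfolding e by simp
    have "1 + (u - 1) + (u - 1)^2 / 2 = 1 + (u - 1) + (F z - u)" by (simp only: h2)
    also have "\<dots> = F z" by simp
    finally have "1 + (u - 1) + (u - 1)^2 / 2 = F z" .
    then show ?thesis unfolding w_def u_def[symmetric] by simp
  qed
  then show ?thesis unfolding subord_def using wh wb w0 by blast
qed

lemma core_upper:
  assumes f: "f \<in> classA" and kh: "k holomorphic_on ball 0 1"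
    and knz: "\<And>z. norm z < 1 \<Longrightarrow> k z \<noteq> 0"
    and feq: "\<And>z. norm z < 1 \<Longrightarrow> f z = z * k z"
    and bound: "\<And>\<zeta>. norm \<zeta> < R \<Longrightarrow> norm (1 + \<zeta> * deriv k \<zeta> / k \<zeta> - 3/2) < 1"
    and r: "0 < r" "r \<le> R" and R1: "R \<le> 1"
  shows "hr f r \<in> SstarCar"
proof -
  have r1: "r \<le> 1" using r R1 by simp
  have cA: "hr f r \<in> classA" by (rule hr_classA[OF f r(1) r1])
  have nz: "hr f r z \<noteq> 0" if "norm z < 1" "z \<noteq> 0" for z
  proof -
    have "norm (complex_of_real r * z) < 1" by (rule norm_rz(1)[OF r(1) r1 that(1)])
    then have "hr f r z = (complex_of_real r * z) * k (complex_of_real r * z) / complex_of_real r"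
      by (simp add: hr_def feq)
    then show ?thesis using knz[OF \<open>norm (complex_of_real r * z) < 1\<close>] r that(2) by simp
  qed
  define G where "G = (\<lambda>\<zeta>. 1 + \<zeta> * deriv k \<zeta> / k \<zeta>)"
  have Gh: "G holomorphic_on ball 0 1"
    unfolding G_def by (intro holomorphic_intros kh) (use knz in auto)
  have sub: "(\<lambda>z. complex_of_real r * z) ` ball 0 1 \<subseteq> ball 0 1"
    using norm_rz(1)[OF r(1) r1] by auto
  have GH: "(\<lambda>z. G (complex_of_real r * z)) holomorphic_on ball 0 1"
    using holomorphic_on_compose_gen[OF _ Gh sub] by (simp add: o_def holomorphic_intros)
  have Feq: "logderiv_quot (hr f r) z = G (complex_of_real r * z)" if "z \<in> ball 0 1" for z
    using logderiv_formula[OF kh knz feq r(1) r1, of z] that by (simp add: G_def)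
  have Fh: "logderiv_quot (hr f r) holomorphic_on ball 0 1"
    by (rule holomorphic_transform[OF GH]) (simp add: Feq)
  have F0: "logderiv_quot (hr f r) 0 = 1" by (simp add: logderiv_quot_def)
  have Fb: "norm (logderiv_quot (hr f r) z - 3/2) < 1" if "norm z < 1" for z
  proof -
    have "norm (complex_of_real r * z) = r * norm z" by (rule norm_rz(2)[OF r(1) r1 that])
    also have "\<dots> < r * 1" using r that by (intro mult_strict_left_mono) auto
    finally have "norm (complex_of_real r * z) < R" using r by simp
    from bound[OF this] show ?thesis using Feq[of z] that by (simp add: G_def)
  qed
  have "subord (logderiv_quot (hr f r)) (\<lambda>z. 1 + z + z^2/2)"
    by (rule sub_from_disc[OF Fh F0 Fb])
  then show ?thesis using cA nz by (auto simp: SstarCar_def)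
qed

lemma core_sharp:
  assumes kh: "k holomorphic_on ball 0 1"
    and knz: "\<And>z. norm z < 1 \<Longrightarrow> k z \<noteq> 0"
    and feq: "\<And>z. norm z < 1 \<Longrightarrow> f z = z * k z"
    and r: "0 < r" "r \<le> 1" and z0: "norm \<zeta>0 < r"
    and val: "1 + \<zeta>0 * deriv k \<zeta>0 / k \<zeta>0 = 1/2"
  shows "hr f r \<notin> SstarCar"
proof
  assume "hr f r \<in> SstarCar"
  then obtain w where wb: "w ` ball 0 1 \<subseteq> ball 0 1"
    and weq: "\<forall>z\<in>ball 0 1. logderiv_quot (hr f r) z = 1 + w z + (w z)^2/2"
    by (auto simp: SstarCar_def subord_def)
  define z where "z = \<zeta>0 / complex_of_real r"
  have zr: "complex_of_real r * z = \<zeta>0" using r by (simp add: z_def)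
  have zn: "norm z < 1" using r z0 by (simp add: z_def norm_divide divide_less_eq)
  have "logderiv_quot (hr f r) z = 1/2"
    using logderiv_formula[OF kh knz feq r zn] val by (simp add: zr)
  with weq zn have e: "1 + w z + (w z)^2/2 = 1/2" by simp
  have "(1 + w z)^2 = 0"
  proof -
    have "(1 + w z)^2 = 2 * (1 + w z + (w z)^2/2) - 1" by (simp add: power2_eq_square algebra_simps)
    then show ?thesis using e by simp
  qed
  then have "w z = -1" by (simp add: add_eq_0_iff)
  moreover have "z \<in> ball 0 1" using zn by simp
  then have "w z \<in> ball 0 1" using wb by blast
  then have "norm (w z) < 1" by simp
  ultimately show False by simp
qed

lemma combine3:
  assumes ah: "a holomorphic_on ball 0 1" and bh: "b holomorphic_on ball 0 1" and ch: "c holomorphic_on ball 0 1"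
    and anz: "a \<zeta> \<noteq> 0" and bnz: "b \<zeta> \<noteq> 0" and cnz: "c \<zeta> \<noteq> 0" and z: "norm \<zeta> < 1"
  shows "1 + \<zeta> * deriv (\<lambda>u. a u * b u * c u) \<zeta> / (a \<zeta> * b \<zeta> * c \<zeta>)
       = (1 + \<zeta> * deriv a \<zeta> / a \<zeta>) + \<zeta> * deriv b \<zeta> / b \<zeta> + \<zeta> * deriv c \<zeta> / c \<zeta>"
proof -
  have "((\<lambda>u. a u * b u * c u) has_field_derivative
     (deriv a \<zeta> * b \<zeta> + a \<zeta> * deriv b \<zeta>) * c \<zeta> + (a \<zeta> * b \<zeta>) * deriv c \<zeta>) (at \<zeta>)"
    using DERIV_mult[OF DERIV_mult[OF hol_deriv_at[OF ah z] hol_deriv_at[OF bh z]] hol_deriv_at[OF ch z]]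
    by (simp add: algebra_simps)
  then have "deriv (\<lambda>u. a u * b u * c u) \<zeta> = (deriv a \<zeta> * b \<zeta> + a \<zeta> * deriv b \<zeta>) * c \<zeta> + (a \<zeta> * b \<zeta>) * deriv c \<zeta>"
    by (rule DERIV_imp_deriv)
  then show ?thesis using anz bnz cnz by (simp add: field_simps)
qed

lemma upper_gen:
  assumes f: "f \<in> classA"
    and kch: "kc holomorphic_on ball 0 1" and qh: "q holomorphic_on ball 0 1" and ph: "p holomorphic_on ball 0 1"
    and kcnz: "\<And>z. norm z < 1 \<Longrightarrow> kc z \<noteq> 0" and qnz: "\<And>z. norm z < 1 \<Longrightarrow> q z \<noteq> 0"
    and pnz: "\<And>z. norm z < 1 \<Longrightarrow> p z \<noteq> 0"
    and feq: "\<And>z. norm z < 1 \<Longrightarrow> f z = z * (kc z * q z * p z)"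
    and Ab: "\<And>\<zeta>. norm \<zeta> < R \<Longrightarrow> norm (1 + \<zeta> * deriv kc \<zeta> / kc \<zeta> - 3/2) \<le> 3/2 - Lb (norm \<zeta>)"
    and qb: "\<And>\<zeta>. norm \<zeta> < R \<Longrightarrow> norm (\<zeta> * deriv q \<zeta> / q \<zeta>) \<le> Bq (norm \<zeta>)"
    and pb: "\<And>\<zeta>. norm \<zeta> < R \<Longrightarrow> norm (\<zeta> * deriv p \<zeta> / p \<zeta>) \<le> Bp (norm \<zeta>)"
    and marg: "\<And>t. 0 \<le> t \<Longrightarrow> t < R \<Longrightarrow> Lb t - Bq t - Bp t > 1/2"
    and r: "0 < r" "r \<le> R" and R1: "R \<le> 1"
  shows "hr f r \<in> SstarCar"
proof (rule core_upper[OF f _ _ feq _ r R1])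
  show "(\<lambda>u. kc u * q u * p u) holomorphic_on ball 0 1" by (intro holomorphic_intros kch qh ph)
  show "\<And>z. norm z < 1 \<Longrightarrow> kc z * q z * p z \<noteq> 0" using kcnz qnz pnz by simp
  fix \<zeta> :: complex assume z: "norm \<zeta> < R"
  then have z1: "norm \<zeta> < 1" using R1 by simp
  have "1 + \<zeta> * deriv (\<lambda>u. kc u * q u * p u) \<zeta> / (kc \<zeta> * q \<zeta> * p \<zeta>) - 3/2
      = (1 + \<zeta> * deriv kc \<zeta> / kc \<zeta> - 3/2) + \<zeta> * deriv q \<zeta> / q \<zeta> + \<zeta> * deriv p \<zeta> / p \<zeta>"
    using combine3[OF kch qh ph kcnz[OF z1] qnz[OF z1] pnz[OF z1] z1] by simp
  also have "norm \<dots> \<le> norm (1 + \<zeta> * deriv kc \<zeta> / kc \<zeta> - 3/2) + norm (\<zeta> * deriv q \<zeta> / q \<zeta>) + norm (\<zeta> * deriv p \<zeta> / p \<zeta>)"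
    by (rule order_trans[OF norm_triangle_ineq add_right_mono[OF norm_triangle_ineq]])
  also have "\<dots> \<le> (3/2 - Lb (norm \<zeta>)) + Bq (norm \<zeta>) + Bp (norm \<zeta>)"
    using Ab[OF z] qb[OF z] pb[OF z] by linarith
  also have "\<dots> < 1" using marg[of "norm \<zeta>"] z by simp
  finally show "norm (1 + \<zeta> * deriv (\<lambda>u. kc u * q u * p u) \<zeta> / (kc \<zeta> * q \<zeta> * p \<zeta>) - 3/2) < 1" .
qed

lemma F3_extract:
  assumes g: "g \<in> F3 chi" and kch: "kc holomorphic_on ball 0 1"
    and kcnz: "\<And>z. norm z < 1 \<Longrightarrow> kc z \<noteq> 0" and kc0: "kc 0 = 1"
    and chieq: "\<And>z. norm z < 1 \<Longrightarrow> chi z = z * kc z"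
  obtains q where "q holomorphic_on ball 0 1" "\<And>z. norm z < 1 \<Longrightarrow> Re (q z) > 0" "q 0 = 1"
    "\<And>z. norm z < 1 \<Longrightarrow> g z = z * (kc z * q z)"
proof -
  have gA: "g \<in> classA" and gpos: "\<And>z. z \<in> ball 0 1 \<Longrightarrow> z \<noteq> 0 \<Longrightarrow> Re (g z / chi z) > 0"
    using g by (auto simp: F3_def)
  define kg where "kg = (\<lambda>z. if z = 0 then 1 else g z / z)"
  have kgh: "kg holomorphic_on ball 0 1" unfolding kg_def by (rule kf_exists(1)[OF gA])
  have geq: "g z = z * kg z" for z unfolding kg_def by (rule kf_exists(2)[OF gA])
  define q where "q = (\<lambda>z. kg z / kc z)"
  have qh: "q holomorphic_on ball 0 1" unfolding q_def by (intro holomorphic_intros kgh kch) (use kcnz in auto)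
  have q0: "q 0 = 1" by (simp add: q_def kg_def kc0)
  have qpos: "Re (q z) > 0" if "norm z < 1" for z
  proof (cases "z = 0")
    case True then show ?thesis by (simp add: q0)
  next
    case False
    have "g z / chi z = q z" using False kcnz[OF that] by (simp add: chieq[OF that] geq q_def)
    then show ?thesis using gpos[of z] that False by simp
  qed
  have "g z = z * (kc z * q z)" if "norm z < 1" for z
    using kcnz[OF that] by (simp add: q_def geq)
  then show ?thesis using that qh qpos q0 by blast
qed

lemma re_pos_nz: "Re x > 0 \<Longrightarrow> x \<noteq> 0" by auto

lemma F1_extract:
  assumes f: "f \<in> F1 chi" and kch: "kc holomorphic_on ball 0 1"
    and kcnz: "\<And>z. norm z < 1 \<Longrightarrow> kc z \<noteq> 0" and kc0: "kc 0 = 1"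
    and chieq: "\<And>z. norm z < 1 \<Longrightarrow> chi z = z * kc z"
  obtains q p where "q holomorphic_on ball 0 1" "\<And>z. norm z < 1 \<Longrightarrow> Re (q z) > 0"
    "p holomorphic_on ball 0 1" "\<And>z. norm z < 1 \<Longrightarrow> Re (p z) > 0"
    "\<And>z. norm z < 1 \<Longrightarrow> f z = z * (kc z * q z * p z)"
proof -
  have fA: "f \<in> classA" using f by (auto simp: F1_def)
  obtain g where g: "g \<in> F3 chi" and fg: "\<And>z. z \<in> ball 0 1 \<Longrightarrow> z \<noteq> 0 \<Longrightarrow> Re (f z / g z) > 0"
    using f by (auto simp: F1_def)
  obtain q where qh: "q holomorphic_on ball 0 1" and qpos: "\<And>z. norm z < 1 \<Longrightarrow> Re (q z) > 0"
    and q0: "q 0 = 1" and geq: "\<And>z. norm z < 1 \<Longrightarrow> g z = z * (kc z * q z)"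
    using F3_extract[OF g kch kcnz kc0 chieq] by blast
  define kf where "kf = (\<lambda>z. if z = 0 then 1 else f z / z)"
  have kfh: "kf holomorphic_on ball 0 1" unfolding kf_def by (rule kf_exists(1)[OF fA])
  have feq: "f z = z * kf z" for z unfolding kf_def by (rule kf_exists(2)[OF fA])
  have qnz: "q z \<noteq> 0" if "norm z < 1" for z using qpos[OF that] by auto
  define p where "p = (\<lambda>z. kf z / (kc z * q z))"
  have ph: "p holomorphic_on ball 0 1" unfolding p_def
    by (intro holomorphic_intros kfh kch qh) (use kcnz qnz in auto)
  have ppos: "Re (p z) > 0" if "norm z < 1" for z
  proof (cases "z = 0")
    case True then show ?thesis by (simp add: p_def kf_def kc0 q0)
  next
    case False
    have "f z / g z = p z" using False kcnz[OF that] qnz[OF that] by (simp add: geq[OF that] feq p_def)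
    then show ?thesis using fg[of z] that False by simp
  qed
  have "f z = z * (kc z * q z * p z)" if "norm z < 1" for z
    using kcnz[OF that] qnz[OF that] by (simp add: p_def feq)
  then show ?thesis using that qh qpos ph ppos by blast
qed

lemma F2_extract:
  assumes f: "f \<in> F2 chi" and kch: "kc holomorphic_on ball 0 1"
    and kcnz: "\<And>z. norm z < 1 \<Longrightarrow> kc z \<noteq> 0" and kc0: "kc 0 = 1"
    and chieq: "\<And>z. norm z < 1 \<Longrightarrow> chi z = z * kc z"
  obtains q p where "q holomorphic_on ball 0 1" "\<And>z. norm z < 1 \<Longrightarrow> Re (q z) > 0"
    "p holomorphic_on ball 0 1" "\<And>z. norm z < 1 \<Longrightarrow> norm (p z - 1) < 1" "p 0 = 1"
    "\<And>z. norm z < 1 \<Longrightarrow> f z = z * (kc z * q z * p z)"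
proof -
  have fA: "f \<in> classA" using f by (auto simp: F2_def)
  obtain g where g: "g \<in> F3 chi" and fg: "\<And>z. z \<in> ball 0 1 \<Longrightarrow> z \<noteq> 0 \<Longrightarrow> norm (f z / g z - 1) < 1"
    using f by (auto simp: F2_def)
  obtain q where qh: "q holomorphic_on ball 0 1" and qpos: "\<And>z. norm z < 1 \<Longrightarrow> Re (q z) > 0"
    and q0: "q 0 = 1" and geq: "\<And>z. norm z < 1 \<Longrightarrow> g z = z * (kc z * q z)"
    using F3_extract[OF g kch kcnz kc0 chieq] by blast
  define kf where "kf = (\<lambda>z. if z = 0 then 1 else f z / z)"
  have kfh: "kf holomorphic_on ball 0 1" unfolding kf_def by (rule kf_exists(1)[OF fA])
  have feq: "f z = z * kf z" for z unfolding kf_def by (rule kf_exists(2)[OF fA])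
  have qnz: "q z \<noteq> 0" if "norm z < 1" for z using qpos[OF that] by auto
  define p where "p = (\<lambda>z. kf z / (kc z * q z))"
  have ph: "p holomorphic_on ball 0 1" unfolding p_def
    by (intro holomorphic_intros kfh kch qh) (use kcnz qnz in auto)
  have p0: "p 0 = 1" by (simp add: p_def kf_def kc0 q0)
  have pb: "norm (p z - 1) < 1" if "norm z < 1" for z
  proof (cases "z = 0")
    case True then show ?thesis by (simp add: p0)
  next
    case False
    have "f z / g z = p z" using False kcnz[OF that] qnz[OF that] by (simp add: geq[OF that] feq p_def)
    then show ?thesis using fg[of z] that False by simp
  qed
  have "f z = z * (kc z * q z * p z)" if "norm z < 1" for z
    using kcnz[OF that] qnz[OF that] by (simp add: p_def feq)
  then show ?thesis using that qh qpos ph pb p0 by blast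
qed

lemma upper_F1:
  assumes f: "f \<in> F1 chi" and kch: "kc holomorphic_on ball 0 1"
    and kcnz: "\<And>z. norm z < 1 \<Longrightarrow> kc z \<noteq> 0" and kc0: "kc 0 = 1"
    and chieq: "\<And>z. norm z < 1 \<Longrightarrow> chi z = z * kc z"
    and Ab: "\<And>\<zeta>. norm \<zeta> < R \<Longrightarrow> norm (1 + \<zeta> * deriv kc \<zeta> / kc \<zeta> - 3/2) \<le> 3/2 - Lb (norm \<zeta>)"
    and marg: "\<And>t. 0 \<le> t \<Longrightarrow> t < R \<Longrightarrow> Lb t - 2*t/(1-t^2) - 2*t/(1-t^2) > 1/2"
    and r: "0 < r" "r \<le> R" and R1: "R \<le> 1"
  shows "hr f r \<in> SstarCar"
proof -
  have fA: "f \<in> classA" using f by (auto simp: F1_def)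
  obtain q p where qh: "q holomorphic_on ball 0 1" and qpos: "\<And>z. norm z < 1 \<Longrightarrow> Re (q z) > 0"
    and ph: "p holomorphic_on ball 0 1" and ppos: "\<And>z. norm z < 1 \<Longrightarrow> Re (p z) > 0"
    and feq: "\<And>z. norm z < 1 \<Longrightarrow> f z = z * (kc z * q z * p z)"
    using F1_extract[OF f kch kcnz kc0 chieq] by blast
  show ?thesis
  proof (rule upper_gen[OF fA kch qh ph kcnz _ _ feq Ab _ _ marg r R1])
    show "q z \<noteq> 0" if "norm z < 1" for z using qpos[OF that] by auto
    show "p z \<noteq> 0" if "norm z < 1" for z using ppos[OF that] by auto
    show "norm (\<zeta> * deriv q \<zeta> / q \<zeta>) \<le> 2 * norm \<zeta> / (1 - norm \<zeta> ^ 2)" if "norm \<zeta> < R" for \<zeta> :: complex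
      using that R1 by (intro cara_bound[OF qh qpos]) auto
    show "norm (\<zeta> * deriv p \<zeta> / p \<zeta>) \<le> 2 * norm \<zeta> / (1 - norm \<zeta> ^ 2)" if "norm \<zeta> < R" for \<zeta> :: complex
      using that R1 by (intro cara_bound[OF ph ppos]) auto
  qed
qed

lemma upper_F2:
  assumes f: "f \<in> F2 chi" and kch: "kc holomorphic_on ball 0 1"
    and kcnz: "\<And>z. norm z < 1 \<Longrightarrow> kc z \<noteq> 0" and kc0: "kc 0 = 1"
    and chieq: "\<And>z. norm z < 1 \<Longrightarrow> chi z = z * kc z"
    and Ab: "\<And>\<zeta>. norm \<zeta> < R \<Longrightarrow> norm (1 + \<zeta> * deriv kc \<zeta> / kc \<zeta> - 3/2) \<le> 3/2 - Lb (norm \<zeta>)"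
    and marg: "\<And>t. 0 \<le> t \<Longrightarrow> t < R \<Longrightarrow> Lb t - 2*t/(1-t^2) - t/(1-t) > 1/2"
    and r: "0 < r" "r \<le> R" and R1: "R \<le> 1"
  shows "hr f r \<in> SstarCar"
proof -
  have fA: "f \<in> classA" using f by (auto simp: F2_def)
  obtain q p where qh: "q holomorphic_on ball 0 1" and qpos: "\<And>z. norm z < 1 \<Longrightarrow> Re (q z) > 0"
    and ph: "p holomorphic_on ball 0 1" and pb: "\<And>z. norm z < 1 \<Longrightarrow> norm (p z - 1) < 1" and p0: "p 0 = 1"
    and feq: "\<And>z. norm z < 1 \<Longrightarrow> f z = z * (kc z * q z * p z)"
    using F2_extract[OF f kch kcnz kc0 chieq] by blast
  show ?thesis
  proof (rule upper_gen[OF fA kch qh ph kcnz _ _ feq Ab _ _ marg r R1])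
    show "q z \<noteq> 0" if "norm z < 1" for z using qpos[OF that] by auto
    show "p z \<noteq> 0" if "norm z < 1" for z
    proof
      assume "p z = 0" then show False using pb[OF that] by simp
    qed
    show "norm (\<zeta> * deriv q \<zeta> / q \<zeta>) \<le> 2 * norm \<zeta> / (1 - norm \<zeta> ^ 2)" if "norm \<zeta> < R" for \<zeta> :: complex
      using that R1 by (intro cara_bound[OF qh qpos]) auto
    show "norm (\<zeta> * deriv p \<zeta> / p \<zeta>) \<le> norm \<zeta> / (1 - norm \<zeta>)" if "norm \<zeta> < R" for \<zeta> :: complex
      using that R1 by (intro f2_bound[OF ph pb p0]) auto
  qed
qed

lemma upper_F3:
  assumes f: "f \<in> F3 chi" and kch: "kc holomorphic_on ball 0 1"
    and kcnz: "\<And>z. norm z < 1 \<Longrightarrow> kc z \<noteq> 0" and kc0: "kc 0 = 1"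
    and chieq: "\<And>z. norm z < 1 \<Longrightarrow> chi z = z * kc z"
    and Ab: "\<And>\<zeta>. norm \<zeta> < R \<Longrightarrow> norm (1 + \<zeta> * deriv kc \<zeta> / kc \<zeta> - 3/2) \<le> 3/2 - Lb (norm \<zeta>)"
    and marg: "\<And>t. 0 \<le> t \<Longrightarrow> t < R \<Longrightarrow> Lb t - 2*t/(1-t^2) - 0 > 1/2"
    and r: "0 < r" "r \<le> R" and R1: "R \<le> 1"
  shows "hr f r \<in> SstarCar"
proof -
  have fA: "f \<in> classA" using f by (auto simp: F3_def)
  obtain q where qh: "q holomorphic_on ball 0 1" and qpos: "\<And>z. norm z < 1 \<Longrightarrow> Re (q z) > 0"
    and q0: "q 0 = 1" and feq: "\<And>z. norm z < 1 \<Longrightarrow> f z = z * (kc z * q z)"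
    using F3_extract[OF f kch kcnz kc0 chieq] by blast
  have feq': "f z = z * (kc z * q z * (\<lambda>_. 1) z)" if "norm z < 1" for z using feq[OF that] by simp
  have ph: "(\<lambda>_. 1::complex) holomorphic_on ball 0 1" by simp
  show ?thesis
  proof (rule upper_gen[OF fA kch qh ph kcnz _ _ feq' Ab _ _ marg r R1])
    show "q z \<noteq> 0" if "norm z < 1" for z using qpos[OF that] by auto
    show "\<And>z. norm z < 1 \<Longrightarrow> (\<lambda>_. 1::complex) z \<noteq> 0" by simp
    show "norm (\<zeta> * deriv q \<zeta> / q \<zeta>) \<le> 2 * norm \<zeta> / (1 - norm \<zeta> ^ 2)" if "norm \<zeta> < R" for \<zeta> :: complex
      using that R1 by (intro cara_bound[OF qh qpos]) auto
    show "norm (\<zeta> * deriv (\<lambda>_. 1::complex) \<zeta> / (\<lambda>_. 1::complex) \<zeta>) \<le> (\<lambda>_. 0) (norm \<zeta>)" for \<zeta>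
      by simp
  qed
qed

lemma radius_eq:
  assumes up: "\<And>r f. 0 < r \<Longrightarrow> r \<le> R \<Longrightarrow> f \<in> F \<Longrightarrow> hr f r \<in> SstarCar"
    and sharp: "\<And>r. R < r \<Longrightarrow> r \<le> 1 \<Longrightarrow> \<exists>f\<in>F. hr f r \<notin> SstarCar"
    and R: "0 < R" "R \<le> 1"
  shows "car_radius F = R"
proof -
  define S where "S = {r. 0 < r \<and> r \<le> 1 \<and> (\<forall>f\<in>F. (\<lambda>z. f (complex_of_real r * z) / complex_of_real r) \<in> SstarCar)}"
  have RS: "R \<in> S" using up R by (auto simp: S_def hr_def)
  have ub: "r \<le> R" if "r \<in> S" for r
  proof (rule ccontr)
    assume "\<not> r \<le> R"
    moreover have "r \<le> 1" using that by (simp add: S_def)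
    ultimately obtain f where "f \<in> F" "hr f r \<notin> SstarCar" using sharp[of r] by force
    then show False using that by (auto simp: S_def hr_def)
  qed
  have "Sup S = R" by (rule cSup_eq_maximum[OF RS ub])
  then show ?thesis by (simp add: car_radius_def S_def)
qed

definition qa :: "complex \<Rightarrow> complex \<Rightarrow> complex" where
  "qa a = (\<lambda>z. (1 + a * z) / (1 - a * z))"

definition pa :: "complex \<Rightarrow> complex \<Rightarrow> complex" where
  "pa a = (\<lambda>z. 1 + a * z)"

lemma az_lt1: "norm (a::complex) = 1 \<Longrightarrow> norm (z::complex) < 1 \<Longrightarrow> norm (a * z) < 1"
  by (simp add: norm_mult)

lemma one_minus_nz: "norm (w::complex) < 1 \<Longrightarrow> 1 - w \<noteq> 0"
  by auto

lemma one_plus_nz: "norm (w::complex) < 1 \<Longrightarrow> 1 + w \<noteq> 0"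
proof
  assume "norm w < 1" "1 + w = 0"
  then have "w = -1" by (simp add: add_eq_0_iff)
  with \<open>norm w < 1\<close> show False by simp
qed

lemma qa_holo: "norm a = 1 \<Longrightarrow> qa a holomorphic_on ball 0 1"
  unfolding qa_def
  by (intro holomorphic_intros) (use az_lt1 one_minus_nz in \<open>fastforce\<close>)

lemma qa_re: assumes "norm a = 1" "norm z < 1" shows "Re (qa a z) > 0"
proof -
  define w where "w = a * z"
  have w1: "norm w < 1" using az_lt1[OF assms] by (simp add: w_def)
  have nz: "1 - w \<noteq> 0" using one_minus_nz[OF w1] .
  have "Re ((1 + w) / (1 - w)) = (Re (1 + w) * Re (1 - w) + Im (1 + w) * Im (1 - w)) / (norm (1 - w))^2"
    by (simp add: Re_divide cmod_power2)
  also have "Re (1 + w) * Re (1 - w) + Im (1 + w) * Im (1 - w) = 1 - (norm w)^2"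
    unfolding cmod_power2 by (simp add: power2_eq_square algebra_simps)
  finally have "Re ((1 + w) / (1 - w)) = (1 - (norm w)^2) / (norm (1 - w))^2" .
  moreover have "1 - (norm w)^2 > 0" using w1 by (simp add: abs_square_less_1)
  moreover have "(norm (1 - w))^2 > 0" using nz by simp
  ultimately show ?thesis by (simp add: qa_def w_def)
qed

lemma qa_nz: "norm a = 1 \<Longrightarrow> norm z < 1 \<Longrightarrow> qa a z \<noteq> 0"
  using qa_re[of a z] by auto

lemma qa0: "qa a 0 = 1" by (simp add: qa_def)

lemma qa_logd:
  assumes a: "norm a = 1" and z: "norm \<zeta> < 1"
  shows "\<zeta> * deriv (qa a) \<zeta> / qa a \<zeta> = 2 * (a * \<zeta>) / (1 - (a * \<zeta>)^2)"
proof -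
  have w1: "norm (a * \<zeta>) < 1" by (rule az_lt1[OF a z])
  have n1: "1 - a * \<zeta> \<noteq> 0" using one_minus_nz[OF w1] .
  have n2: "1 + a * \<zeta> \<noteq> 0" using one_plus_nz[OF w1] .
  have "(qa a has_field_derivative ((0 + a * 1) * (1 - a * \<zeta>) - (1 + a * \<zeta>) * (0 - a * 1)) / ((1 - a * \<zeta>) * (1 - a * \<zeta>))) (at \<zeta>)"
    unfolding qa_def by (rule DERIV_divide) (use n1 in \<open>auto intro!: derivative_eq_intros\<close>)
  then have d: "deriv (qa a) \<zeta> = 2 * a / ((1 - a * \<zeta>) * (1 - a * \<zeta>))"
    by (simp add: DERIV_imp_deriv algebra_simps)
  have e: "1 - (a * \<zeta>)^2 = (1 - a * \<zeta>) * (1 + a * \<zeta>)" by (simp add: power2_eq_square algebra_simps)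
  have g: "\<And>X Y c u::complex. X \<noteq> 0 \<Longrightarrow> Y \<noteq> 0 \<Longrightarrow> u * (c / (X * X)) / (Y / X) = c * u / (X * Y)"
    by (simp add: field_simps)
  have "\<zeta> * deriv (qa a) \<zeta> / qa a \<zeta> = \<zeta> * (2 * a / ((1 - a * \<zeta>) * (1 - a * \<zeta>))) / ((1 + a * \<zeta>) / (1 - a * \<zeta>))"
    by (subst d) (simp add: qa_def)
  also have "\<dots> = 2 * a * \<zeta> / ((1 - a * \<zeta>) * (1 + a * \<zeta>))" by (rule g[OF n1 n2])
  finally show ?thesis unfolding e by (simp add: mult.assoc)
qed

lemma pa_holo: "pa a holomorphic_on ball 0 1"
  unfolding pa_def by (intro holomorphic_intros)

lemma pa_b: "norm a = 1 \<Longrightarrow> norm z < 1 \<Longrightarrow> norm (pa a z - 1) < 1"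
  by (simp add: pa_def norm_mult)

lemma pa_nz: "norm a = 1 \<Longrightarrow> norm z < 1 \<Longrightarrow> pa a z \<noteq> 0"
  unfolding pa_def using one_plus_nz az_lt1 by blast

lemma pa0: "pa a 0 = 1" by (simp add: pa_def)

lemma pa_logd:
  assumes a: "norm a = 1" and z: "norm \<zeta> < 1"
  shows "\<zeta> * deriv (pa a) \<zeta> / pa a \<zeta> = (a * \<zeta>) / (1 + a * \<zeta>)"
proof -
  have "(pa a has_field_derivative a) (at \<zeta>)"
    unfolding pa_def by (auto intro!: derivative_eq_intros)
  then have "deriv (pa a) \<zeta> = a" by (rule DERIV_imp_deriv)
  then show ?thesis by (simp add: pa_def)
qed

lemma sharp_gen:
  assumes kch: "kc holomorphic_on ball 0 1" and qh: "q holomorphic_on ball 0 1" and ph: "p holomorphic_on ball 0 1"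
    and kcnz: "\<And>z. norm z < 1 \<Longrightarrow> kc z \<noteq> 0" and qnz: "\<And>z. norm z < 1 \<Longrightarrow> q z \<noteq> 0"
    and pnz: "\<And>z. norm z < 1 \<Longrightarrow> p z \<noteq> 0"
    and r: "0 < r" "r \<le> 1" and z0: "norm \<zeta>0 < r"
    and val: "(1 + \<zeta>0 * deriv kc \<zeta>0 / kc \<zeta>0) + \<zeta>0 * deriv q \<zeta>0 / q \<zeta>0 + \<zeta>0 * deriv p \<zeta>0 / p \<zeta>0 = 1/2"
  shows "hr (\<lambda>z. z * (kc z * q z * p z)) r \<notin> SstarCar"
proof (rule core_sharp[OF _ _ _ r z0])
  show "(\<lambda>u. kc u * q u * p u) holomorphic_on ball 0 1" by (intro holomorphic_intros kch qh ph)
  show "\<And>z. norm z < 1 \<Longrightarrow> kc z * q z * p z \<noteq> 0" using kcnz qnz pnz by simp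
  show "\<And>z. norm z < 1 \<Longrightarrow> z * (kc z * q z * p z) = z * (kc z * q z * p z)" by simp
  have z1: "norm \<zeta>0 < 1" using z0 r by simp
  show "1 + \<zeta>0 * deriv (\<lambda>u. kc u * q u * p u) \<zeta>0 / (kc \<zeta>0 * q \<zeta>0 * p \<zeta>0) = 1/2"
    using combine3[OF kch qh ph kcnz[OF z1] qnz[OF z1] pnz[OF z1] z1] val by simp
qed

lemma F3_member:
  assumes kch: "kc holomorphic_on ball 0 1"
    and kcnz: "\<And>z. norm z < 1 \<Longrightarrow> kc z \<noteq> 0" and kc0: "kc 0 = 1"
    and chieq: "\<And>z. norm z < 1 \<Longrightarrow> chi z = z * kc z"
    and qh: "q holomorphic_on ball 0 1" and qpos: "\<And>z. norm z < 1 \<Longrightarrow> Re (q z) > 0" and q0: "q 0 = 1"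
  shows "(\<lambda>z. z * (kc z * q z)) \<in> F3 chi"
proof -
  have "(\<lambda>z. z * (kc z * q z)) \<in> classA"
    using mul_classA[of "\<lambda>z. kc z * q z"] kch qh kc0 q0 by (simp add: holomorphic_on_mult)
  moreover have "Re (z * (kc z * q z) / chi z) > 0" if "z \<in> ball 0 1" "z \<noteq> 0" for z
  proof -
    have z1: "norm z < 1" using that by simp
    have "z * (kc z * q z) / chi z = q z" using kcnz[OF z1] that(2) by (simp add: chieq[OF z1])
    then show ?thesis using qpos[OF z1] by simp
  qed
  ultimately show ?thesis by (simp add: F3_def)
qed

lemma cancel3: "(x::complex) \<noteq> 0 \<Longrightarrow> y \<noteq> 0 \<Longrightarrow> w \<noteq> 0 \<Longrightarrow> x * (y * w * p) / (x * (y * w)) = p"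
  by (simp add: field_simps)

lemma F1_member:
  assumes kch: "kc holomorphic_on ball 0 1"
    and kcnz: "\<And>z. norm z < 1 \<Longrightarrow> kc z \<noteq> 0" and kc0: "kc 0 = 1"
    and chieq: "\<And>z. norm z < 1 \<Longrightarrow> chi z = z * kc z"
    and qh: "q holomorphic_on ball 0 1" and qpos: "\<And>z. norm z < 1 \<Longrightarrow> Re (q z) > 0" and q0: "q 0 = 1"
    and ph: "p holomorphic_on ball 0 1" and ppos: "\<And>z. norm z < 1 \<Longrightarrow> Re (p z) > 0" and p0: "p 0 = 1"
  shows "(\<lambda>z. z * (kc z * q z * p z)) \<in> F1 chi"
proof -
  have g: "(\<lambda>z. z * (kc z * q z)) \<in> F3 chi" by (rule F3_member[OF kch kcnz kc0 chieq qh qpos q0])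
  have "(\<lambda>z. z * (kc z * q z * p z)) \<in> classA"
    using mul_classA[of "\<lambda>z. kc z * q z * p z"] kch qh ph kc0 q0 p0 by (simp add: holomorphic_on_mult)
  moreover have "Re (z * (kc z * q z * p z) / (z * (kc z * q z))) > 0" if "z \<in> ball 0 1" "z \<noteq> 0" for z
  proof -
    have z1: "norm z < 1" using that by simp
    have "q z \<noteq> 0" using qpos[OF z1] by auto
    then have "z * (kc z * q z * p z) / (z * (kc z * q z)) = p z" using kcnz[OF z1] that(2) by (intro cancel3)
    then show ?thesis using ppos[OF z1] by simp
  qed
  moreover have "\<exists>g\<in>F3 chi. \<forall>z\<in>ball 0 1. z \<noteq> 0 \<longrightarrow> Re (z * (kc z * q z * p z) / g z) > 0"
    by (rule bexI[OF _ g]) (use calculation(2) in simp)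
  ultimately show ?thesis unfolding F1_def by simp
qed

lemma F2_member:
  assumes kch: "kc holomorphic_on ball 0 1"
    and kcnz: "\<And>z. norm z < 1 \<Longrightarrow> kc z \<noteq> 0" and kc0: "kc 0 = 1"
    and chieq: "\<And>z. norm z < 1 \<Longrightarrow> chi z = z * kc z"
    and qh: "q holomorphic_on ball 0 1" and qpos: "\<And>z. norm z < 1 \<Longrightarrow> Re (q z) > 0" and q0: "q 0 = 1"
    and ph: "p holomorphic_on ball 0 1" and pb: "\<And>z. norm z < 1 \<Longrightarrow> norm (p z - 1) < 1" and p0: "p 0 = 1"
  shows "(\<lambda>z. z * (kc z * q z * p z)) \<in> F2 chi"
proof -
  have g: "(\<lambda>z. z * (kc z * q z)) \<in> F3 chi" by (rule F3_member[OF kch kcnz kc0 chieq qh qpos q0])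
  have "(\<lambda>z. z * (kc z * q z * p z)) \<in> classA"
    using mul_classA[of "\<lambda>z. kc z * q z * p z"] kch qh ph kc0 q0 p0 by (simp add: holomorphic_on_mult)
  moreover have "norm (z * (kc z * q z * p z) / (z * (kc z * q z)) - 1) < 1" if "z \<in> ball 0 1" "z \<noteq> 0" for z
  proof -
    have z1: "norm z < 1" using that by simp
    have "q z \<noteq> 0" using qpos[OF z1] by auto
    then have "z * (kc z * q z * p z) / (z * (kc z * q z)) = p z" using kcnz[OF z1] that(2) by (intro cancel3)
    then show ?thesis using pb[OF z1] by simp
  qed
  moreover have "\<exists>g\<in>F3 chi. \<forall>z\<in>ball 0 1. z \<noteq> 0 \<longrightarrow> norm (z * (kc z * q z * p z) / g z - 1) < 1"
    by (rule bexI[OF _ g]) (use calculation(2) in simp)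
  ultimately show ?thesis unfolding F2_def by simp
qed

lemma sharp_F1:
  assumes kch: "kc holomorphic_on ball 0 1"
    and kcnz: "\<And>z. norm z < 1 \<Longrightarrow> kc z \<noteq> 0" and kc0: "kc 0 = 1"
    and chieq: "\<And>z. norm z < 1 \<Longrightarrow> chi z = z * kc z"
    and a: "norm a = 1" and az: "a * \<zeta>0 = - complex_of_real R" and nz: "norm \<zeta>0 = R"
    and Aval: "1 + \<zeta>0 * deriv kc \<zeta>0 / kc \<zeta>0 = complex_of_real L"
    and eq: "L - 2*R/(1-R^2) - 2*R/(1-R^2) = 1/2"
    and r: "R < r" "r \<le> 1" and R: "0 < R"
  shows "\<exists>f\<in>F1 chi. hr f r \<notin> SstarCar"
proof
  show "(\<lambda>z. z * (kc z * qa a z * qa a z)) \<in> F1 chi"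
    by (rule F1_member[OF kch kcnz kc0 chieq qa_holo[OF a] qa_re[OF a] qa0 qa_holo[OF a] qa_re[OF a] qa0])
  have z1: "norm \<zeta>0 < 1" using nz r by simp
  have r0: "0 < r" using r R by simp
  have zr: "norm \<zeta>0 < r" using nz r by simp
  have ql: "\<zeta>0 * deriv (qa a) \<zeta>0 / qa a \<zeta>0 = complex_of_real (- (2*R/(1-R^2)))"
    using qa_logd[OF a z1] az by simp
  have "(1 + \<zeta>0 * deriv kc \<zeta>0 / kc \<zeta>0) + \<zeta>0 * deriv (qa a) \<zeta>0 / qa a \<zeta>0 + \<zeta>0 * deriv (qa a) \<zeta>0 / qa a \<zeta>0
      = complex_of_real (L - 2*R/(1-R^2) - 2*R/(1-R^2))"
    unfolding Aval ql by simp
  also have "\<dots> = 1/2" unfolding eq by simp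
  finally have val: "(1 + \<zeta>0 * deriv kc \<zeta>0 / kc \<zeta>0) + \<zeta>0 * deriv (qa a) \<zeta>0 / qa a \<zeta>0 + \<zeta>0 * deriv (qa a) \<zeta>0 / qa a \<zeta>0 = 1/2" .
  show "hr (\<lambda>z. z * (kc z * qa a z * qa a z)) r \<notin> SstarCar"
    by (rule sharp_gen[OF kch qa_holo[OF a] qa_holo[OF a] kcnz qa_nz[OF a] qa_nz[OF a] r0 r(2) zr val])
qed

lemma sharp_F2:
  assumes kch: "kc holomorphic_on ball 0 1"
    and kcnz: "\<And>z. norm z < 1 \<Longrightarrow> kc z \<noteq> 0" and kc0: "kc 0 = 1"
    and chieq: "\<And>z. norm z < 1 \<Longrightarrow> chi z = z * kc z"
    and a: "norm a = 1" and az: "a * \<zeta>0 = - complex_of_real R" and nz: "norm \<zeta>0 = R"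
    and Aval: "1 + \<zeta>0 * deriv kc \<zeta>0 / kc \<zeta>0 = complex_of_real L"
    and eq: "L - 2*R/(1-R^2) - R/(1-R) = 1/2"
    and r: "R < r" "r \<le> 1" and R: "0 < R"
  shows "\<exists>f\<in>F2 chi. hr f r \<notin> SstarCar"
proof
  show "(\<lambda>z. z * (kc z * qa a z * pa a z)) \<in> F2 chi"
    by (rule F2_member[OF kch kcnz kc0 chieq qa_holo[OF a] qa_re[OF a] qa0 pa_holo pa_b[OF a] pa0])
  have z1: "norm \<zeta>0 < 1" using nz r by simp
  have r0: "0 < r" using r R by simp
  have zr: "norm \<zeta>0 < r" using nz r by simp
  have ql: "\<zeta>0 * deriv (qa a) \<zeta>0 / qa a \<zeta>0 = complex_of_real (- (2*R/(1-R^2)))"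
    using qa_logd[OF a z1] az by simp
  have pl: "\<zeta>0 * deriv (pa a) \<zeta>0 / pa a \<zeta>0 = complex_of_real (- (R/(1-R)))"
    using pa_logd[OF a z1] az by simp
  have "(1 + \<zeta>0 * deriv kc \<zeta>0 / kc \<zeta>0) + \<zeta>0 * deriv (qa a) \<zeta>0 / qa a \<zeta>0 + \<zeta>0 * deriv (pa a) \<zeta>0 / pa a \<zeta>0
      = complex_of_real (L - 2*R/(1-R^2) - R/(1-R))"
    unfolding Aval ql pl by simp
  also have "\<dots> = 1/2" unfolding eq by simp
  finally have val: "(1 + \<zeta>0 * deriv kc \<zeta>0 / kc \<zeta>0) + \<zeta>0 * deriv (qa a) \<zeta>0 / qa a \<zeta>0 + \<zeta>0 * deriv (pa a) \<zeta>0 / pa a \<zeta>0 = 1/2" .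
  show "hr (\<lambda>z. z * (kc z * qa a z * pa a z)) r \<notin> SstarCar"
    by (rule sharp_gen[OF kch qa_holo[OF a] pa_holo kcnz qa_nz[OF a] pa_nz[OF a] r0 r(2) zr val])
qed

lemma sharp_F3:
  assumes kch: "kc holomorphic_on ball 0 1"
    and kcnz: "\<And>z. norm z < 1 \<Longrightarrow> kc z \<noteq> 0" and kc0: "kc 0 = 1"
    and chieq: "\<And>z. norm z < 1 \<Longrightarrow> chi z = z * kc z"
    and a: "norm a = 1" and az: "a * \<zeta>0 = - complex_of_real R" and nz: "norm \<zeta>0 = R"
    and Aval: "1 + \<zeta>0 * deriv kc \<zeta>0 / kc \<zeta>0 = complex_of_real L"
    and eq: "L - 2*R/(1-R^2) - 0 = 1/2"
    and r: "R < r" "r \<le> 1" and R: "0 < R"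
  shows "\<exists>f\<in>F3 chi. hr f r \<notin> SstarCar"
proof
  show "(\<lambda>z. z * (kc z * qa a z)) \<in> F3 chi"
    by (rule F3_member[OF kch kcnz kc0 chieq qa_holo[OF a] qa_re[OF a] qa0])
  have z1: "norm \<zeta>0 < 1" using nz r by simp
  have r0: "0 < r" using r R by simp
  have zr: "norm \<zeta>0 < r" using nz r by simp
  have ql: "\<zeta>0 * deriv (qa a) \<zeta>0 / qa a \<zeta>0 = complex_of_real (- (2*R/(1-R^2)))"
    using qa_logd[OF a z1] az by simp
  have "(1 + \<zeta>0 * deriv kc \<zeta>0 / kc \<zeta>0) + \<zeta>0 * deriv (qa a) \<zeta>0 / qa a \<zeta>0 + \<zeta>0 * deriv (\<lambda>_. 1) \<zeta>0 / (\<lambda>_. 1) \<zeta>0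
      = complex_of_real (L - 2*R/(1-R^2) - 0)"
    unfolding Aval ql by simp
  also have "\<dots> = 1/2" unfolding eq by simp
  finally have val: "(1 + \<zeta>0 * deriv kc \<zeta>0 / kc \<zeta>0) + \<zeta>0 * deriv (qa a) \<zeta>0 / qa a \<zeta>0 + \<zeta>0 * deriv (\<lambda>_. 1) \<zeta>0 / (\<lambda>_. 1) \<zeta>0 = 1/2" .
  have "hr (\<lambda>z. z * (kc z * qa a z * (\<lambda>_. 1) z)) r \<notin> SstarCar"
    by (rule sharp_gen[OF kch qa_holo[OF a] _ kcnz qa_nz[OF a] _ r0 r(2) zr val]) (simp_all add: holomorphic_on_const)
  then show "hr (\<lambda>z. z * (kc z * qa a z)) r \<notin> SstarCar" by simp
qed

lemma norm_lin_sq: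
  fixes u :: complex and a b :: real
  shows "norm (complex_of_real a + complex_of_real b * u)^2 = a^2 + 2*a*b*Re u + b^2 * (norm u)^2"
  unfolding cmod_power2 by (simp add: power2_eq_square algebra_simps)

lemma mob_bound:
  fixes u :: complex and p0 p1 q0 q1 P Q :: real
  assumes Y: "complex_of_real q0 + complex_of_real q1 * u \<noteq> 0" and P: "P \<ge> 0" and Q: "Q > 0"
    and poly: "(p0^2 + 2*p0*p1*Re u + p1^2 * (norm u)^2) * Q^2 \<le> P^2 * (q0^2 + 2*q0*q1*Re u + q1^2 * (norm u)^2)"
  shows "norm ((complex_of_real p0 + complex_of_real p1 * u) / (complex_of_real q0 + complex_of_real q1 * u)) \<le> P / Q"
proof -
  define X where "X = norm (complex_of_real p0 + complex_of_real p1 * u)"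
  define Z where "Z = norm (complex_of_real q0 + complex_of_real q1 * u)"
  have Z0: "Z > 0" using Y by (simp add: Z_def)
  have "X^2 * Q^2 \<le> P^2 * Z^2"
    using poly unfolding X_def Z_def norm_lin_sq .
  then have "(X * Q)^2 \<le> (P * Z)^2" by (simp only: power_mult_distrib)
  then have "X * Q \<le> P * Z"
    using power2_le_imp_le[of "X * Q" "P * Z"] P Z0 by simp
  then have "X / Z \<le> P / Q" using Z0 Q by (simp add: field_simps)
  then show ?thesis by (simp add: X_def Z_def norm_divide)
qed

lemma Re_le_norm': "Re u \<le> norm u" "- norm u \<le> Re u"
  using abs_Re_le_cmod[of u] by auto

lemma chiA:
  shows "(\<lambda>_. 1::complex) holomorphic_on ball 0 1" "\<And>z::complex. norm z < 1 \<Longrightarrow> (\<lambda>_. 1::complex) z \<noteq> 0"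
    "(\<lambda>_. 1::complex) 0 = 1" "\<And>z::complex. norm z < 1 \<Longrightarrow> (\<lambda>z. z) z = z * (\<lambda>_. 1::complex) z"
    "\<And>\<zeta>. 1 + \<zeta> * deriv (\<lambda>_. 1::complex) \<zeta> / (\<lambda>_. 1::complex) \<zeta> = 1"
  by (simp_all add: holomorphic_on_const)

lemma AbA: "norm ((1::complex) - 3/2) \<le> 3/2 - (\<lambda>t::real. 1) t"
  by simp

lemma chiB:
  shows "(\<lambda>z. 1 / (1 + z)) holomorphic_on ball 0 1" "\<And>z::complex. norm z < 1 \<Longrightarrow> 1 / (1 + z) \<noteq> 0"
    "1 / (1 + 0) = (1::complex)" "\<And>z::complex. norm z < 1 \<Longrightarrow> z / (1 + z) = z * (1 / (1 + z))"
    "\<And>\<zeta>::complex. norm \<zeta> < 1 \<Longrightarrow> 1 + \<zeta> * deriv (\<lambda>z. 1 / (1 + z)) \<zeta> / (1 / (1 + \<zeta>)) = 1 / (1 + \<zeta>)"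
proof -
  show "(\<lambda>z. 1 / (1 + z)) holomorphic_on ball 0 1"
    by (intro holomorphic_intros) (use one_plus_nz in auto)
  show "\<And>z::complex. norm z < 1 \<Longrightarrow> 1 / (1 + z) \<noteq> 0" using one_plus_nz by simp
  show "1 / (1 + 0) = (1::complex)" by simp
  show "\<And>z::complex. norm z < 1 \<Longrightarrow> z / (1 + z) = z * (1 / (1 + z))" by simp
  fix \<zeta> :: complex assume z: "norm \<zeta> < 1"
  have n: "1 + \<zeta> \<noteq> 0" using one_plus_nz[OF z] .
  have "((\<lambda>z. 1 / (1 + z)) has_field_derivative (0 * (1 + \<zeta>) - 1 * (0 + 1)) / ((1 + \<zeta>) * (1 + \<zeta>))) (at \<zeta>)"
    by (rule DERIV_divide) (use n in \<open>auto intro!: derivative_eq_intros\<close>)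
  then have d: "deriv (\<lambda>z. 1 / (1 + z)) \<zeta> = - 1 / ((1 + \<zeta>) * (1 + \<zeta>))" by (simp add: DERIV_imp_deriv)
  show "1 + \<zeta> * deriv (\<lambda>z. 1 / (1 + z)) \<zeta> / (1 / (1 + \<zeta>)) = 1 / (1 + \<zeta>)"
  proof -
    have g: "\<And>X u::complex. X \<noteq> 0 \<Longrightarrow> 1 + u * (- 1 / (X * X)) / (1 / X) = 1 - u / X"
      by (simp add: field_simps)
    have "1 + \<zeta> * deriv (\<lambda>z. 1 / (1 + z)) \<zeta> / (1 / (1 + \<zeta>)) = 1 + \<zeta> * (- 1 / ((1 + \<zeta>) * (1 + \<zeta>))) / (1 / (1 + \<zeta>))"
      by (simp only: d)
    also have "\<dots> = 1 - \<zeta> / (1 + \<zeta>)" by (rule g[OF n])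
    also have "\<dots> = 1 / (1 + \<zeta>)" using n by (simp add: field_simps)
    finally show ?thesis .
  qed
qed

lemma AbB:
  fixes \<zeta> :: complex
  assumes t: "norm \<zeta> \<le> 2/5"
  shows "norm (1 / (1 + \<zeta>) - 3/2) \<le> 3/2 - 1 / (1 + norm \<zeta>)"
proof -
  define t where "t = norm \<zeta>"
  have n: "1 + \<zeta> \<noteq> 0" using one_plus_nz[of \<zeta>] t by simp
  have e: "1 / (1 + \<zeta>) - 3/2 = (complex_of_real (-1) + complex_of_real (-3) * \<zeta>) / (complex_of_real 2 + complex_of_real 2 * \<zeta>)"
    using n by (simp add: field_simps)
  have Y: "complex_of_real 2 + complex_of_real 2 * \<zeta> \<noteq> 0"
  proof -
    have e2: "complex_of_real 2 + complex_of_real 2 * \<zeta> = 2 * (1 + \<zeta>)" by (simp add: algebra_simps)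
    show ?thesis unfolding e2 using n by (metis mult_eq_0_iff zero_neq_numeral)
  qed
  have x: "Re \<zeta> \<le> t" unfolding t_def by (rule Re_le_norm')
  have t0: "0 \<le> t" "t \<le> 2/5" using t by (auto simp: t_def)
  have tn: "norm \<zeta> = t" by (simp add: t_def)
  have poly: "((-1)^2 + 2*(-1)*(-3)*Re \<zeta> + (-3)^2 * t^2) * (2*(1+t))^2 \<le> (1+3*t)^2 * (2^2 + 2*2*2*Re \<zeta> + 2^2 * t^2)"
  proof -
    have "(1+3*t)^2 * (2^2 + 2*2*2*Re \<zeta> + 2^2 * t^2) - ((-1)^2 + 2*(-1)*(-3)*Re \<zeta> + (-3)^2 * t^2) * (2*(1+t))^2
        = 4 * (4 - 12*t^2) * (t - Re \<zeta>)"
      by (simp add: power2_eq_square algebra_simps)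
    moreover have "4 - 12*t^2 \<ge> 0"
    proof -
      have "t^2 \<le> (2/5)^2" using power_mono[of t "2/5" 2] t0 by simp
      then show ?thesis by (simp add: power2_eq_square)
    qed
    moreover have "0 \<le> t - Re \<zeta>" using x by simp
    ultimately show ?thesis using mult_nonneg_nonneg[of "4 - 12*t^2" "t - Re \<zeta>"] by linarith
  qed
  have "norm ((complex_of_real (-1) + complex_of_real (-3) * \<zeta>) / (complex_of_real 2 + complex_of_real 2 * \<zeta>)) \<le> (1+3*t) / (2*(1+t))"
    by (rule mob_bound[OF Y]) (use t0 poly in \<open>simp_all add: tn\<close>)
  moreover have "(1+3*t) / (2*(1+t)) = 3/2 - 1 / (1 + t)" using t0 by (simp add: field_simps)
  ultimately show ?thesis using e by (simp add: t_def)
qed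

lemma sq_le_25: "0 \<le> (t::real) \<Longrightarrow> t \<le> 2/5 \<Longrightarrow> t^2 \<le> 4/25"
  using power_mono[of t "2/5" 2] by (simp add: power2_eq_square)

lemma AbCD:
  fixes u :: complex
  assumes t: "norm u \<le> 2/5"
  shows "norm ((1 + u) / (1 - u) - 3/2) \<le> 3/2 - (1 - norm u) / (1 + norm u)"
proof -
  define t where "t = norm u"
  have tn: "norm u = t" by (simp add: t_def)
  have n: "1 - u \<noteq> 0" using one_minus_nz[of u] t by simp
  have e: "(1 + u) / (1 - u) - 3/2 = (complex_of_real (-1) + complex_of_real 5 * u) / (complex_of_real 2 + complex_of_real (-2) * u)"
    using n by (simp add: field_simps)
  have Y: "complex_of_real 2 + complex_of_real (-2) * u \<noteq> 0"
  proof -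
    have e2: "complex_of_real 2 + complex_of_real (-2) * u = 2 * (1 - u)" by (simp add: algebra_simps)
    show ?thesis unfolding e2 using n by (metis mult_eq_0_iff zero_neq_numeral)
  qed
  have x: "- t \<le> Re u" unfolding t_def by (rule Re_le_norm')
  have t0: "0 \<le> t" "t \<le> 2/5" using t by (auto simp: t_def)
  have poly: "((-1)^2 + 2*(-1)*5*Re u + 5^2 * t^2) * (2*(1+t))^2 \<le> (1+5*t)^2 * (2^2 + 2*2*(-2)*Re u + (-2)^2 * t^2)"
  proof -
    have "(1+5*t)^2 * (2^2 + 2*2*(-2)*Re u + (-2)^2 * t^2) - ((-1)^2 + 2*(-1)*5*Re u + 5^2 * t^2) * (2*(1+t))^2
        = 4 * (8 - 40*t^2) * (Re u + t)"
      by (simp add: power2_eq_square algebra_simps)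
    moreover have "8 - 40*t^2 \<ge> 0" using sq_le_25[OF t0] by simp
    moreover have "0 \<le> Re u + t" using x by simp
    ultimately show ?thesis using mult_nonneg_nonneg[of "8 - 40*t^2" "Re u + t"] by linarith
  qed
  have "norm ((complex_of_real (-1) + complex_of_real 5 * u) / (complex_of_real 2 + complex_of_real (-2) * u)) \<le> (1+5*t) / (2*(1+t))"
    by (rule mob_bound[OF Y]) (use t0 poly in \<open>simp_all add: tn\<close>)
  moreover have "(1+5*t) / (2*(1+t)) = 3/2 - (1 - t) / (1 + t)" using t0 by (simp add: field_simps)
  ultimately show ?thesis using e by (simp add: t_def)
qed

lemma AbE:
  fixes u :: complex
  assumes t: "norm u \<le> 2/5"
  shows "norm ((2 + 2 * u) / (2 + u) - 3/2) \<le> 3/2 - (2 - 2 * norm u) / (2 - norm u)"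
proof -
  define t where "t = norm u"
  have tn: "norm u = t" by (simp add: t_def)
  have n: "2 + u \<noteq> 0"
  proof
    assume "2 + u = 0" then have "u = -2" by (simp add: add_eq_0_iff)
    then show False using t by simp
  qed
  have e: "(2 + 2 * u) / (2 + u) - 3/2 = (complex_of_real (-2) + complex_of_real 1 * u) / (complex_of_real 4 + complex_of_real 2 * u)"
    using n by (simp add: field_simps)
  have Y: "complex_of_real 4 + complex_of_real 2 * u \<noteq> 0"
  proof -
    have e2: "complex_of_real 4 + complex_of_real 2 * u = 2 * (2 + u)" by (simp add: algebra_simps)
    show ?thesis unfolding e2 using n by (metis mult_eq_0_iff zero_neq_numeral)
  qed
  have x: "- t \<le> Re u" unfolding t_def by (rule Re_le_norm')
  have t0: "0 \<le> t" "t \<le> 2/5" using t by (auto simp: t_def)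
  have poly: "((-2)^2 + 2*(-2)*1*Re u + 1^2 * t^2) * (2*(2-t))^2 \<le> (2+t)^2 * (4^2 + 2*4*2*Re u + 2^2 * t^2)"
  proof -
    have "(2+t)^2 * (4^2 + 2*4*2*Re u + 2^2 * t^2) - ((-2)^2 + 2*(-2)*1*Re u + 1^2 * t^2) * (2*(2-t))^2
        = 4 * (32 + 8*t^2) * (Re u + t)"
      by (simp add: power2_eq_square algebra_simps)
    moreover have "32 + 8*t^2 \<ge> 0" by simp
    moreover have "0 \<le> Re u + t" using x by simp
    ultimately show ?thesis using mult_nonneg_nonneg[of "32 + 8*t^2" "Re u + t"] by linarith
  qed
  have "norm ((complex_of_real (-2) + complex_of_real 1 * u) / (complex_of_real 4 + complex_of_real 2 * u)) \<le> (2+t) / (2*(2-t))"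
    by (rule mob_bound[OF Y]) (use t0 poly in \<open>simp_all add: tn\<close>)
  moreover have "(2+t) / (2*(2-t)) = 3/2 - (2 - 2*t) / (2 - t)" using t0 by (simp add: field_simps)
  ultimately show ?thesis using e by (simp add: t_def)
qed

lemma chiC:
  shows "(\<lambda>z. 1 / (1 - z^2)) holomorphic_on ball 0 1" "\<And>z::complex. norm z < 1 \<Longrightarrow> 1 / (1 - z^2) \<noteq> 0"
    "1 / (1 - 0^2) = (1::complex)" "\<And>z::complex. norm z < 1 \<Longrightarrow> z / (1 - z^2) = z * (1 / (1 - z^2))"
    "\<And>\<zeta>::complex. norm \<zeta> < 1 \<Longrightarrow> 1 + \<zeta> * deriv (\<lambda>z. 1 / (1 - z^2)) \<zeta> / (1 / (1 - \<zeta>^2)) = (1 + \<zeta>^2) / (1 - \<zeta>^2)"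
proof -
  have nz: "1 - z^2 \<noteq> 0" if "norm (z::complex) < 1" for z
  proof -
    have "norm (z^2) < 1" using that by (simp add: norm_power abs_square_less_1)
    then show ?thesis using one_minus_nz by blast
  qed
  show "(\<lambda>z. 1 / (1 - z^2)) holomorphic_on ball 0 1"
    by (intro holomorphic_intros) (use nz in auto)
  show "\<And>z::complex. norm z < 1 \<Longrightarrow> 1 / (1 - z^2) \<noteq> 0" using nz by simp
  show "1 / (1 - 0^2) = (1::complex)" by simp
  show "\<And>z::complex. norm z < 1 \<Longrightarrow> z / (1 - z^2) = z * (1 / (1 - z^2))" by simp
  fix \<zeta> :: complex assume z: "norm \<zeta> < 1"
  have n: "1 - \<zeta>^2 \<noteq> 0" using nz[OF z] .
  have "((\<lambda>z. 1 / (1 - z^2)) has_field_derivative (0 * (1 - \<zeta>^2) - 1 * (0 - 2 * \<zeta>)) / ((1 - \<zeta>^2) * (1 - \<zeta>^2))) (at \<zeta>)"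
    by (rule DERIV_divide) (use n in \<open>auto intro!: derivative_eq_intros\<close>)
  then have d: "deriv (\<lambda>z. 1 / (1 - z^2)) \<zeta> = 2 * \<zeta> / ((1 - \<zeta>^2) * (1 - \<zeta>^2))" by (simp add: DERIV_imp_deriv)
  have g: "\<And>X u::complex. X \<noteq> 0 \<Longrightarrow> 1 + u * (2 * u / (X * X)) / (1 / X) = (X + 2 * u * u) / X"
    by (simp add: field_simps)
  have "1 + \<zeta> * deriv (\<lambda>z. 1 / (1 - z^2)) \<zeta> / (1 / (1 - \<zeta>^2)) = 1 + \<zeta> * (2 * \<zeta> / ((1 - \<zeta>^2) * (1 - \<zeta>^2))) / (1 / (1 - \<zeta>^2))"
    by (simp only: d)
  also have "\<dots> = ((1 - \<zeta>^2) + 2 * \<zeta> * \<zeta>) / (1 - \<zeta>^2)" by (rule g[OF n])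
  also have "\<dots> = (1 + \<zeta>^2) / (1 - \<zeta>^2)" by (simp add: power2_eq_square)
  finally show "1 + \<zeta> * deriv (\<lambda>z. 1 / (1 - z^2)) \<zeta> / (1 / (1 - \<zeta>^2)) = (1 + \<zeta>^2) / (1 - \<zeta>^2)" .
qed

lemma chiD:
  shows "(\<lambda>z. 1 / (1 - z)^2) holomorphic_on ball 0 1" "\<And>z::complex. norm z < 1 \<Longrightarrow> 1 / (1 - z)^2 \<noteq> 0"
    "1 / (1 - 0)^2 = (1::complex)" "\<And>z::complex. norm z < 1 \<Longrightarrow> z / (1 - z)^2 = z * (1 / (1 - z)^2)"
    "\<And>\<zeta>::complex. norm \<zeta> < 1 \<Longrightarrow> 1 + \<zeta> * deriv (\<lambda>z. 1 / (1 - z)^2) \<zeta> / (1 / (1 - \<zeta>)^2) = (1 + \<zeta>) / (1 - \<zeta>)"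
proof -
  have nz: "(1 - z)^2 \<noteq> 0" if "norm (z::complex) < 1" for z
    using one_minus_nz[OF that] by simp
  show "(\<lambda>z. 1 / (1 - z)^2) holomorphic_on ball 0 1"
    by (intro holomorphic_intros) (use nz in auto)
  show "\<And>z::complex. norm z < 1 \<Longrightarrow> 1 / (1 - z)^2 \<noteq> 0" using nz by simp
  show "1 / (1 - 0)^2 = (1::complex)" by simp
  show "\<And>z::complex. norm z < 1 \<Longrightarrow> z / (1 - z)^2 = z * (1 / (1 - z)^2)" by simp
  fix \<zeta> :: complex assume z: "norm \<zeta> < 1"
  have n1: "1 - \<zeta> \<noteq> 0" using one_minus_nz[OF z] .
  have n: "(1 - \<zeta>)^2 \<noteq> 0" using nz[OF z] .
  have "((\<lambda>z. 1 / (1 - z)^2) has_field_derivative (0 * (1 - \<zeta>)^2 - 1 * (2 * (1 - \<zeta>) * (0 - 1))) / ((1 - \<zeta>)^2 * (1 - \<zeta>)^2)) (at \<zeta>)"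
    by (rule DERIV_divide) (use n in \<open>auto intro!: derivative_eq_intros\<close>)
  then have d: "deriv (\<lambda>z. 1 / (1 - z)^2) \<zeta> = 2 * (1 - \<zeta>) / ((1 - \<zeta>)^2 * (1 - \<zeta>)^2)" by (simp add: DERIV_imp_deriv)
  have g: "\<And>X u::complex. X \<noteq> 0 \<Longrightarrow> 1 + u * (2 * X / (X^2 * X^2)) / (1 / X^2) = (X + 2 * u) / X"
    by (simp add: field_simps power2_eq_square)
  have "1 + \<zeta> * deriv (\<lambda>z. 1 / (1 - z)^2) \<zeta> / (1 / (1 - \<zeta>)^2) = 1 + \<zeta> * (2 * (1 - \<zeta>) / ((1 - \<zeta>)^2 * (1 - \<zeta>)^2)) / (1 / (1 - \<zeta>)^2)"
    by (simp only: d)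
  also have "\<dots> = ((1 - \<zeta>) + 2 * \<zeta>) / (1 - \<zeta>)" by (rule g[OF n1])
  also have "\<dots> = (1 + \<zeta>) / (1 - \<zeta>)" by simp
  finally show "1 + \<zeta> * deriv (\<lambda>z. 1 / (1 - z)^2) \<zeta> / (1 / (1 - \<zeta>)^2) = (1 + \<zeta>) / (1 - \<zeta>)" .
qed

lemma chiE:
  shows "(\<lambda>z. 1 + z / 2) holomorphic_on ball 0 1" "\<And>z::complex. norm z < 1 \<Longrightarrow> 1 + z / 2 \<noteq> 0"
    "1 + 0 / 2 = (1::complex)" "\<And>z::complex. norm z < 1 \<Longrightarrow> z + z^2 / 2 = z * (1 + z / 2)"
    "\<And>\<zeta>::complex. norm \<zeta> < 1 \<Longrightarrow> 1 + \<zeta> * deriv (\<lambda>z. 1 + z / 2) \<zeta> / (1 + \<zeta> / 2) = (2 + 2 * \<zeta>) / (2 + \<zeta>)"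
proof -
  have nz: "1 + z / 2 \<noteq> 0" if "norm (z::complex) < 1" for z
  proof -
    have "norm (z / 2) < 1" using that by (simp add: norm_divide)
    then show ?thesis using one_plus_nz by blast
  qed
  show "(\<lambda>z. 1 + z / 2) holomorphic_on ball 0 1" by (intro holomorphic_intros) simp
  show "\<And>z::complex. norm z < 1 \<Longrightarrow> 1 + z / 2 \<noteq> 0" using nz by simp
  show "1 + 0 / 2 = (1::complex)" by simp
  show "\<And>z::complex. norm z < 1 \<Longrightarrow> z + z^2 / 2 = z * (1 + z / 2)" by (simp add: power2_eq_square algebra_simps)
  fix \<zeta> :: complex assume z: "norm \<zeta> < 1"
  have n: "1 + \<zeta> / 2 \<noteq> 0" using nz[OF z] .
  have n2: "2 + \<zeta> \<noteq> 0" using n by (metis add_divide_distrib div_0 divide_self_if one_add_one zero_neq_numeral)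
  have "((\<lambda>z. 1 + z / 2) has_field_derivative 1 / 2) (at \<zeta>)"
    by (auto intro!: derivative_eq_intros)
  then have d: "deriv (\<lambda>z. 1 + z / 2) \<zeta> = 1 / 2" by (rule DERIV_imp_deriv)
  show "1 + \<zeta> * deriv (\<lambda>z. 1 + z / 2) \<zeta> / (1 + \<zeta> / 2) = (2 + 2 * \<zeta>) / (2 + \<zeta>)"
    unfolding d using n n2 by (simp add: field_simps)
qed

lemma mono_2t:
  fixes s t :: real
  assumes "0 \<le> s" "s < t" "t < 1"
  shows "2 * s/(1-s^2) < 2*t/(1-t^2)"
proof -
  have s1: "1 - s^2 > 0" "1 - t^2 > 0" using assms by (simp_all add: abs_square_less_1)
  have "s * (1 - t^2) < t * (1 - s^2)"
  proof -
    have "t * (1 - s^2) - s * (1 - t^2) = (t - s) * (1 + s * t)" by (simp add: power2_eq_square algebra_simps)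
    moreover have st: "0 < 1 + s * t" using assms mult_nonneg_nonneg[of s t] by linarith
    moreover have "(t - s) * (1 + s * t) > 0" using assms st by (intro mult_pos_pos) auto
    ultimately show ?thesis by linarith
  qed
  have D: "(1 - s^2) * (1 - t^2) > 0" using s1 by simp
  have "s * (1 - t^2) / ((1 - s^2) * (1 - t^2)) < t * (1 - s^2) / ((1 - s^2) * (1 - t^2))"
    by (rule divide_strict_right_mono[OF \<open>s * (1 - t^2) < t * (1 - s^2)\<close> D])
  moreover have "s * (1 - t^2) / ((1 - s^2) * (1 - t^2)) = s / (1 - s^2)" using s1 by simp
  moreover have "t * (1 - s^2) / ((1 - s^2) * (1 - t^2)) = t / (1 - t^2)" using s1 by simp
  ultimately have "s / (1 - s^2) < t / (1 - t^2)" by simp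
  then show ?thesis by simp
qed

lemma mono_t1:
  fixes s t :: real
  assumes "0 \<le> s" "s < t" "t < 1"
  shows "s/(1-s) < t/(1-t)"
  using assms by (simp add: divide_simps algebra_simps)

lemma radius_F1:
  assumes kch: "kc holomorphic_on ball 0 1"
    and kcnz: "\<And>z. norm z < 1 \<Longrightarrow> kc z \<noteq> 0" and kc0: "kc 0 = 1"
    and chieq: "\<And>z. norm z < 1 \<Longrightarrow> chi z = z * kc z"
    and Aeq: "\<And>\<zeta>. norm \<zeta> < 1 \<Longrightarrow> 1 + \<zeta> * deriv kc \<zeta> / kc \<zeta> = A \<zeta>"
    and Ab: "\<And>\<zeta>. norm \<zeta> \<le> 2/5 \<Longrightarrow> norm (A \<zeta> - 3/2) \<le> 3/2 - Lb (norm \<zeta>)"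
    and Lanti: "\<And>s t. 0 \<le> s \<Longrightarrow> s \<le> t \<Longrightarrow> t \<le> 2/5 \<Longrightarrow> Lb t \<le> Lb s"
    and a: "norm a = 1" and az: "a * \<zeta>0 = - complex_of_real R" and nz: "norm \<zeta>0 = R"
    and Aval: "A \<zeta>0 = complex_of_real (Lb R)"
    and eq: "Lb R - 2*R/(1-R^2) - 2*R/(1-R^2) = 1/2"
    and R: "0 < R" "R \<le> 2/5"
  shows "car_radius (F1 chi) = R"
proof (rule radius_eq)
  show "0 < R" "R \<le> 1" using R by auto
  fix r f assume r: "0 < r" "r \<le> R" and f: "f \<in> F1 chi"
  show "hr f r \<in> SstarCar"
  proof (rule upper_F1[OF f kch kcnz kc0 chieq _ _ r])
    show "R \<le> 1" using R by simp
    fix \<zeta> :: complex assume "norm \<zeta> < R"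
    then show "norm (1 + \<zeta> * deriv kc \<zeta> / kc \<zeta> - 3/2) \<le> 3/2 - Lb (norm \<zeta>)"
      using Aeq Ab R by simp
  next
    fix t :: real assume t: "0 \<le> t" "t < R"
    have "Lb R \<le> Lb t" using Lanti[of t R] t R by simp
    moreover have "2*t/(1-t^2) < 2*R/(1-R^2)" using mono_2t[of t R] t R by simp
    ultimately show "Lb t - 2*t/(1-t^2) - 2*t/(1-t^2) > 1/2" using eq by linarith
  qed
next
  fix r assume r: "R < r" "r \<le> 1"
  have z1: "norm \<zeta>0 < 1" using nz R by simp
  have av: "1 + \<zeta>0 * deriv kc \<zeta>0 / kc \<zeta>0 = complex_of_real (Lb R)" using Aeq[OF z1] Aval by (rule trans)
  show "\<exists>f\<in>F1 chi. hr f r \<notin> SstarCar"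
    by (rule sharp_F1[OF kch kcnz kc0 chieq a az nz av eq r R(1)])
qed

lemma radius_F2:
  assumes kch: "kc holomorphic_on ball 0 1"
    and kcnz: "\<And>z. norm z < 1 \<Longrightarrow> kc z \<noteq> 0" and kc0: "kc 0 = 1"
    and chieq: "\<And>z. norm z < 1 \<Longrightarrow> chi z = z * kc z"
    and Aeq: "\<And>\<zeta>. norm \<zeta> < 1 \<Longrightarrow> 1 + \<zeta> * deriv kc \<zeta> / kc \<zeta> = A \<zeta>"
    and Ab: "\<And>\<zeta>. norm \<zeta> \<le> 2/5 \<Longrightarrow> norm (A \<zeta> - 3/2) \<le> 3/2 - Lb (norm \<zeta>)"
    and Lanti: "\<And>s t. 0 \<le> s \<Longrightarrow> s \<le> t \<Longrightarrow> t \<le> 2/5 \<Longrightarrow> Lb t \<le> Lb s"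
    and a: "norm a = 1" and az: "a * \<zeta>0 = - complex_of_real R" and nz: "norm \<zeta>0 = R"
    and Aval: "A \<zeta>0 = complex_of_real (Lb R)"
    and eq: "Lb R - 2*R/(1-R^2) - R/(1-R) = 1/2"
    and R: "0 < R" "R \<le> 2/5"
  shows "car_radius (F2 chi) = R"
proof (rule radius_eq)
  show "0 < R" "R \<le> 1" using R by auto
  fix r f assume r: "0 < r" "r \<le> R" and f: "f \<in> F2 chi"
  show "hr f r \<in> SstarCar"
  proof (rule upper_F2[OF f kch kcnz kc0 chieq _ _ r])
    show "R \<le> 1" using R by simp
    fix \<zeta> :: complex assume "norm \<zeta> < R"
    then show "norm (1 + \<zeta> * deriv kc \<zeta> / kc \<zeta> - 3/2) \<le> 3/2 - Lb (norm \<zeta>)"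
      using Aeq Ab R by simp
  next
    fix t :: real assume t: "0 \<le> t" "t < R"
    have "Lb R \<le> Lb t" using Lanti[of t R] t R by simp
    moreover have "2*t/(1-t^2) < 2*R/(1-R^2)" using mono_2t[of t R] t R by simp
    moreover have "t/(1-t) < R/(1-R)" using mono_t1[of t R] t R by simp
    ultimately show "Lb t - 2*t/(1-t^2) - t/(1-t) > 1/2" using eq by linarith
  qed
next
  fix r assume r: "R < r" "r \<le> 1"
  have z1: "norm \<zeta>0 < 1" using nz R by simp
  have av: "1 + \<zeta>0 * deriv kc \<zeta>0 / kc \<zeta>0 = complex_of_real (Lb R)" using Aeq[OF z1] Aval by (rule trans)
  show "\<exists>f\<in>F2 chi. hr f r \<notin> SstarCar"
    by (rule sharp_F2[OF kch kcnz kc0 chieq a az nz av eq r R(1)])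
qed

lemma radius_F3:
  assumes kch: "kc holomorphic_on ball 0 1"
    and kcnz: "\<And>z. norm z < 1 \<Longrightarrow> kc z \<noteq> 0" and kc0: "kc 0 = 1"
    and chieq: "\<And>z. norm z < 1 \<Longrightarrow> chi z = z * kc z"
    and Aeq: "\<And>\<zeta>. norm \<zeta> < 1 \<Longrightarrow> 1 + \<zeta> * deriv kc \<zeta> / kc \<zeta> = A \<zeta>"
    and Ab: "\<And>\<zeta>. norm \<zeta> \<le> 2/5 \<Longrightarrow> norm (A \<zeta> - 3/2) \<le> 3/2 - Lb (norm \<zeta>)"
    and Lanti: "\<And>s t. 0 \<le> s \<Longrightarrow> s \<le> t \<Longrightarrow> t \<le> 2/5 \<Longrightarrow> Lb t \<le> Lb s"
    and a: "norm a = 1" and az: "a * \<zeta>0 = - complex_of_real R" and nz: "norm \<zeta>0 = R"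
    and Aval: "A \<zeta>0 = complex_of_real (Lb R)"
    and eq: "Lb R - 2*R/(1-R^2) = 1/2"
    and R: "0 < R" "R \<le> 2/5"
  shows "car_radius (F3 chi) = R"
proof (rule radius_eq)
  show "0 < R" "R \<le> 1" using R by auto
  fix r f assume r: "0 < r" "r \<le> R" and f: "f \<in> F3 chi"
  show "hr f r \<in> SstarCar"
  proof (rule upper_F3[OF f kch kcnz kc0 chieq _ _ r])
    show "R \<le> 1" using R by simp
    fix \<zeta> :: complex assume "norm \<zeta> < R"
    then show "norm (1 + \<zeta> * deriv kc \<zeta> / kc \<zeta> - 3/2) \<le> 3/2 - Lb (norm \<zeta>)"
      using Aeq Ab R by simp
  next
    fix t :: real assume t: "0 \<le> t" "t < R"
    have "Lb R \<le> Lb t" using Lanti[of t R] t R by simp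
    moreover have "2*t/(1-t^2) < 2*R/(1-R^2)" using mono_2t[of t R] t R by simp
    ultimately show "Lb t - 2*t/(1-t^2) - 0 > 1/2" using eq by linarith
  qed
next
  fix r assume r: "R < r" "r \<le> 1"
  have z1: "norm \<zeta>0 < 1" using nz R by simp
  have av: "1 + \<zeta>0 * deriv kc \<zeta>0 / kc \<zeta>0 = complex_of_real (Lb R)" using Aeq[OF z1] Aval by (rule trans)
  show "\<exists>f\<in>F3 chi. hr f r \<notin> SstarCar"
  proof -
    have eq3: "Lb R - 2*R/(1-R^2) - 0 = 1/2" using eq by simp
    show ?thesis by (rule sharp_F3[OF kch kcnz kc0 chieq a az nz av eq3 r R(1)])
  qed
qed

lemma caseA:
  assumes R: "0 < R" "R \<le> 2/5"
  shows "1 - 2*R/(1-R^2) - 2*R/(1-R^2) = 1/2 \<Longrightarrow> car_radius (F1 (\<lambda>z. z)) = R"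
    and "1 - 2*R/(1-R^2) - R/(1-R) = 1/2 \<Longrightarrow> car_radius (F2 (\<lambda>z. z)) = R"
    and "1 - 2*R/(1-R^2) = 1/2 \<Longrightarrow> car_radius (F3 (\<lambda>z. z)) = R"
proof -
  have nz: "norm (- complex_of_real R) = R" using R by simp
  have az: "1 * (- complex_of_real R) = - complex_of_real R" by simp
  have Ab: "norm ((\<lambda>_. 1::complex) \<zeta> - 3/2) \<le> 3/2 - (\<lambda>_. 1::real) (norm \<zeta>)" for \<zeta> :: complex by simp
  have Lanti: "(\<lambda>_. 1::real) t \<le> (\<lambda>_. 1::real) s" for s t by simp
  have Aval: "(\<lambda>_. 1::complex) (- complex_of_real R) = complex_of_real ((\<lambda>_. 1::real) R)" by simp
  have Aeq: "1 + \<zeta> * deriv (\<lambda>_. 1) \<zeta> / (\<lambda>_. 1) \<zeta> = (\<lambda>_. 1::complex) \<zeta>" for \<zeta> :: complex by simp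
  show "1 - 2*R/(1-R^2) - 2*R/(1-R^2) = 1/2 \<Longrightarrow> car_radius (F1 (\<lambda>z. z)) = R"
    by (rule radius_F1[OF chiA(1,2,3,4) Aeq Ab Lanti _ az nz Aval _ R]) simp_all
  show "1 - 2*R/(1-R^2) - R/(1-R) = 1/2 \<Longrightarrow> car_radius (F2 (\<lambda>z. z)) = R"
    by (rule radius_F2[OF chiA(1,2,3,4) Aeq Ab Lanti _ az nz Aval _ R]) simp_all
  show "1 - 2*R/(1-R^2) = 1/2 \<Longrightarrow> car_radius (F3 (\<lambda>z. z)) = R"
    by (rule radius_F3[OF chiA(1,2,3,4) Aeq Ab Lanti _ az nz Aval _ R]) simp_all
qed

lemma caseB:
  assumes R: "0 < R" "R \<le> 2/5"
  shows "1/(1+R) - 2*R/(1-R^2) - 2*R/(1-R^2) = 1/2 \<Longrightarrow> car_radius (F1 (\<lambda>z. z / (1 + z))) = R"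
    and "1/(1+R) - 2*R/(1-R^2) - R/(1-R) = 1/2 \<Longrightarrow> car_radius (F2 (\<lambda>z. z / (1 + z))) = R"
    and "1/(1+R) - 2*R/(1-R^2) = 1/2 \<Longrightarrow> car_radius (F3 (\<lambda>z. z / (1 + z))) = R"
proof -
  have nz: "norm (complex_of_real R) = R" using R by simp
  have az: "(-1) * (complex_of_real R) = - complex_of_real R" by simp
  have a: "norm (-1::complex) = 1" by simp
  have Ab: "norm ((\<lambda>\<zeta>. 1 / (1 + \<zeta>)) \<zeta> - 3/2) \<le> 3/2 - (\<lambda>t. 1 / (1 + t)) (norm \<zeta>)"
    if "norm \<zeta> \<le> 2/5" for \<zeta> :: complex using AbB[OF that] by simp
  have Lanti: "(\<lambda>t. 1 / (1 + t)) t \<le> (\<lambda>t::real. 1 / (1 + t)) s" if "0 \<le> s" "s \<le> t" for s t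
    using that by (simp add: frac_le)
  have Aval: "(\<lambda>\<zeta>. 1 / (1 + \<zeta>)) (complex_of_real R) = complex_of_real ((\<lambda>t. 1 / (1 + t)) R)" by simp
  show "1/(1+R) - 2*R/(1-R^2) - 2*R/(1-R^2) = 1/2 \<Longrightarrow> car_radius (F1 (\<lambda>z. z / (1 + z))) = R"
    by (rule radius_F1[OF chiB(1,2,3,4) chiB(5) Ab Lanti a az nz Aval _ R]) simp_all
  show "1/(1+R) - 2*R/(1-R^2) - R/(1-R) = 1/2 \<Longrightarrow> car_radius (F2 (\<lambda>z. z / (1 + z))) = R"
    by (rule radius_F2[OF chiB(1,2,3,4) chiB(5) Ab Lanti a az nz Aval _ R]) simp_all
  show "1/(1+R) - 2*R/(1-R^2) = 1/2 \<Longrightarrow> car_radius (F3 (\<lambda>z. z / (1 + z))) = R"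
    by (rule radius_F3[OF chiB(1,2,3,4) chiB(5) Ab Lanti a az nz Aval _ R]) simp_all
qed

lemma caseC:
  assumes R: "0 < R" "R \<le> 2/5"
  shows "(1-R^2)/(1+R^2) - 2*R/(1-R^2) - 2*R/(1-R^2) = 1/2 \<Longrightarrow> car_radius (F1 (\<lambda>z. z / (1 - z^2))) = R"
    and "(1-R^2)/(1+R^2) - 2*R/(1-R^2) - R/(1-R) = 1/2 \<Longrightarrow> car_radius (F2 (\<lambda>z. z / (1 - z^2))) = R"
    and "(1-R^2)/(1+R^2) - 2*R/(1-R^2) = 1/2 \<Longrightarrow> car_radius (F3 (\<lambda>z. z / (1 - z^2))) = R"
proof -
  have nz: "norm (\<i> * complex_of_real R) = R" using R by (simp add: norm_mult)
  have az: "\<i> * (\<i> * complex_of_real R) = - complex_of_real R" by (simp flip: mult.assoc)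
  have a: "norm (\<i>::complex) = 1" by simp
  have Ab: "norm ((\<lambda>\<zeta>. (1 + \<zeta>^2) / (1 - \<zeta>^2)) \<zeta> - 3/2) \<le> 3/2 - (\<lambda>t. (1 - t^2) / (1 + t^2)) (norm \<zeta>)"
    if "norm \<zeta> \<le> 2/5" for \<zeta> :: complex
  proof -
    have "norm (\<zeta>^2) \<le> 2/5" using sq_le_25[OF norm_ge_zero that] by (simp add: norm_power)
    from AbCD[OF this] show ?thesis by (simp add: norm_power)
  qed
  have Lanti: "(\<lambda>t. (1 - t^2) / (1 + t^2)) t \<le> (\<lambda>t::real. (1 - t^2) / (1 + t^2)) s" if "0 \<le> s" "s \<le> t" for s t
  proof -
    have e: "(1 - x^2) / (1 + x^2) = 2 / (1 + x^2) - 1" for x :: real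
    proof -
      have "1 + x^2 > 0" by (simp add: add_pos_nonneg)
      then show ?thesis by (simp add: field_simps)
    qed
    have "s^2 \<le> t^2" using power_mono[OF that(2) that(1), of 2] .
    then have "2 / (1 + t^2) \<le> 2 / (1 + s^2)" by (intro divide_left_mono) (auto simp: add_pos_nonneg)
    then show ?thesis by (simp add: e)
  qed
  have Aval: "(\<lambda>\<zeta>. (1 + \<zeta>^2) / (1 - \<zeta>^2)) (\<i> * complex_of_real R) = complex_of_real ((\<lambda>t. (1 - t^2) / (1 + t^2)) R)"
  proof -
    have "(\<i> * complex_of_real R)^2 = - complex_of_real (R^2)" by (simp add: power_mult_distrib)
    then show ?thesis by simp
  qed
  show "(1-R^2)/(1+R^2) - 2*R/(1-R^2) - 2*R/(1-R^2) = 1/2 \<Longrightarrow> car_radius (F1 (\<lambda>z. z / (1 - z^2))) = R"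
    by (rule radius_F1[OF chiC(1,2,3,4) chiC(5) Ab Lanti a az nz Aval _ R]) simp_all
  show "(1-R^2)/(1+R^2) - 2*R/(1-R^2) - R/(1-R) = 1/2 \<Longrightarrow> car_radius (F2 (\<lambda>z. z / (1 - z^2))) = R"
    by (rule radius_F2[OF chiC(1,2,3,4) chiC(5) Ab Lanti a az nz Aval _ R]) simp_all
  show "(1-R^2)/(1+R^2) - 2*R/(1-R^2) = 1/2 \<Longrightarrow> car_radius (F3 (\<lambda>z. z / (1 - z^2))) = R"
    by (rule radius_F3[OF chiC(1,2,3,4) chiC(5) Ab Lanti a az nz Aval _ R]) simp_all
qed

lemma caseD:
  assumes R: "0 < R" "R \<le> 2/5"
  shows "(1-R)/(1+R) - 2*R/(1-R^2) - 2*R/(1-R^2) = 1/2 \<Longrightarrow> car_radius (F1 (\<lambda>z. z / (1 - z)^2)) = R"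
    and "(1-R)/(1+R) - 2*R/(1-R^2) - R/(1-R) = 1/2 \<Longrightarrow> car_radius (F2 (\<lambda>z. z / (1 - z)^2)) = R"
    and "(1-R)/(1+R) - 2*R/(1-R^2) = 1/2 \<Longrightarrow> car_radius (F3 (\<lambda>z. z / (1 - z)^2)) = R"
proof -
  have nz: "norm (- complex_of_real R) = R" using R by simp
  have az: "1 * (- complex_of_real R) = - complex_of_real R" by simp
  have a: "norm (1::complex) = 1" by simp
  have Ab: "norm ((\<lambda>\<zeta>. (1 + \<zeta>) / (1 - \<zeta>)) \<zeta> - 3/2) \<le> 3/2 - (\<lambda>t. (1 - t) / (1 + t)) (norm \<zeta>)"
    if "norm \<zeta> \<le> 2/5" for \<zeta> :: complex using AbCD[OF that] by simp
  have Lanti: "(\<lambda>t. (1 - t) / (1 + t)) t \<le> (\<lambda>t::real. (1 - t) / (1 + t)) s" if "0 \<le> s" "s \<le> t" for s t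
  proof -
    have e: "(1 - x) / (1 + x) = 2 / (1 + x) - 1" if "x \<ge> 0" for x :: real
      using that by (simp add: field_simps)
    have "2 / (1 + t) \<le> 2 / (1 + s)" using that by (intro divide_left_mono) auto
    then show ?thesis using that by (simp add: e)
  qed
  have Aval: "(\<lambda>\<zeta>. (1 + \<zeta>) / (1 - \<zeta>)) (- complex_of_real R) = complex_of_real ((\<lambda>t. (1 - t) / (1 + t)) R)"
    by simp
  show "(1-R)/(1+R) - 2*R/(1-R^2) - 2*R/(1-R^2) = 1/2 \<Longrightarrow> car_radius (F1 (\<lambda>z. z / (1 - z)^2)) = R"
    by (rule radius_F1[OF chiD(1,2,3,4) chiD(5) Ab Lanti a az nz Aval _ R]) simp_all
  show "(1-R)/(1+R) - 2*R/(1-R^2) - R/(1-R) = 1/2 \<Longrightarrow> car_radius (F2 (\<lambda>z. z / (1 - z)^2)) = R"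
    by (rule radius_F2[OF chiD(1,2,3,4) chiD(5) Ab Lanti a az nz Aval _ R]) simp_all
  show "(1-R)/(1+R) - 2*R/(1-R^2) = 1/2 \<Longrightarrow> car_radius (F3 (\<lambda>z. z / (1 - z)^2)) = R"
    by (rule radius_F3[OF chiD(1,2,3,4) chiD(5) Ab Lanti a az nz Aval _ R]) simp_all
qed

lemma caseE:
  assumes R: "0 < R" "R \<le> 2/5"
  shows "(2-2*R)/(2-R) - 2*R/(1-R^2) - 2*R/(1-R^2) = 1/2 \<Longrightarrow> car_radius (F1 (\<lambda>z. z + z^2 / 2)) = R"
    and "(2-2*R)/(2-R) - 2*R/(1-R^2) - R/(1-R) = 1/2 \<Longrightarrow> car_radius (F2 (\<lambda>z. z + z^2 / 2)) = R"
    and "(2-2*R)/(2-R) - 2*R/(1-R^2) = 1/2 \<Longrightarrow> car_radius (F3 (\<lambda>z. z + z^2 / 2)) = R"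
proof -
  have nz: "norm (- complex_of_real R) = R" using R by simp
  have az: "1 * (- complex_of_real R) = - complex_of_real R" by simp
  have a: "norm (1::complex) = 1" by simp
  have Ab: "norm ((\<lambda>\<zeta>. (2 + 2 * \<zeta>) / (2 + \<zeta>)) \<zeta> - 3/2) \<le> 3/2 - (\<lambda>t. (2 - 2 * t) / (2 - t)) (norm \<zeta>)"
    if "norm \<zeta> \<le> 2/5" for \<zeta> :: complex using AbE[OF that] by simp
  have Lanti: "(\<lambda>t. (2 - 2 * t) / (2 - t)) t \<le> (\<lambda>t::real. (2 - 2 * t) / (2 - t)) s" if "0 \<le> s" "s \<le> t" "t \<le> 2/5" for s t
  proof -
    have e: "(2 - 2 * x) / (2 - x) = 2 - 2 / (2 - x)" if "x \<le> 2/5" for x :: real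
      using that by (simp add: field_simps)
    have "2 / (2 - s) \<le> 2 / (2 - t)" using that by (intro divide_left_mono) auto
    then show ?thesis using that by (simp add: e)
  qed
  have Aval: "(\<lambda>\<zeta>. (2 + 2 * \<zeta>) / (2 + \<zeta>)) (- complex_of_real R) = complex_of_real ((\<lambda>t. (2 - 2 * t) / (2 - t)) R)"
    by simp
  show "(2-2*R)/(2-R) - 2*R/(1-R^2) - 2*R/(1-R^2) = 1/2 \<Longrightarrow> car_radius (F1 (\<lambda>z. z + z^2 / 2)) = R"
    by (rule radius_F1[OF chiE(1,2,3,4) chiE(5) Ab Lanti a az nz Aval _ R]) simp_all
  show "(2-2*R)/(2-R) - 2*R/(1-R^2) - R/(1-R) = 1/2 \<Longrightarrow> car_radius (F2 (\<lambda>z. z + z^2 / 2)) = R"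
    by (rule radius_F2[OF chiE(1,2,3,4) chiE(5) Ab Lanti a az nz Aval _ R]) simp_all
  show "(2-2*R)/(2-R) - 2*R/(1-R^2) = 1/2 \<Longrightarrow> car_radius (F3 (\<lambda>z. z + z^2 / 2)) = R"
    by (rule radius_F3[OF chiE(1,2,3,4) chiE(5) Ab Lanti a az nz Aval _ R]) simp_all
qed

lemma dens:
  fixes t :: real assumes "0 \<le> t" "t \<le> 2/5"
  shows "1 - t^2 \<noteq> 0" "1 + t \<noteq> 0" "1 - t \<noteq> 0" "1 + t^2 \<noteq> 0" "2 - t \<noteq> 0"
proof -
  have "t^2 \<le> 4/25" by (rule sq_le_25[OF assms])
  then show "1 - t^2 \<noteq> 0" by simp
  show "1 + t \<noteq> 0" "1 - t \<noteq> 0" "2 - t \<noteq> 0" using assms by auto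
  have "0 \<le> t^2" by simp
  then show "1 + t^2 \<noteq> 0" by linarith
qed

lemma dens2:
  fixes t :: real assumes "0 \<le> t" "t \<le> 2/5"
  shows "1 - t^2 > 0" "1 + t > 0" "1 - t > 0" "1 + t^2 > 0" "2 - t > 0"
proof -
  have "t^2 \<le> 4/25" by (rule sq_le_25[OF assms])
  then show "1 - t^2 > 0" by simp
  show "1 + t > 0" "1 - t > 0" "2 - t > 0" using assms by auto
  have "0 \<le> t^2" by simp
  then show "1 + t^2 > 0" by linarith
qed
lemma idA1:
  fixes t :: real assumes "0 \<le> t" "t \<le> 2/5"
  shows "1 - 2*t/(1-t^2) - 2*t/(1-t^2) - 1/2 = (1 - 8*t - t^2) / (2*(1-t^2))"
  using dens2[OF assms] by (simp add: divide_simps) (simp add: algebra_simps power2_eq_square power3_eq_cube power4_eq_xxxx)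
lemma idA2:
  fixes t :: real assumes "0 \<le> t" "t \<le> 2/5"
  shows "1 - 2*t/(1-t^2) - t/(1-t) - 1/2 = (1 - 6*t - 3*t^2) / (2*(1-t^2))"
  using dens2[OF assms] by (simp add: divide_simps) (simp add: algebra_simps power2_eq_square power3_eq_cube power4_eq_xxxx)
lemma idA3:
  fixes t :: real assumes "0 \<le> t" "t \<le> 2/5"
  shows "1 - 2*t/(1-t^2) - 1/2 = (1 - 4*t - t^2) / (2*(1-t^2))"
  using dens2[OF assms] by (simp add: divide_simps) (simp add: algebra_simps power2_eq_square power3_eq_cube power4_eq_xxxx)

lemma idB1:
  fixes t :: real assumes "0 \<le> t" "t \<le> 2/5"
  shows "1/(1+t) - 2*t/(1-t^2) - 2*t/(1-t^2) - 1/2 = (t^2 - 10*t + 1) / (2*(1-t^2))"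
  using dens2[OF assms] by (simp add: divide_simps) (simp add: algebra_simps power2_eq_square power3_eq_cube power4_eq_xxxx)
lemma idB2:
  fixes t :: real assumes "0 \<le> t" "t \<le> 2/5"
  shows "1/(1+t) - 2*t/(1-t^2) - t/(1-t) - 1/2 = (1 - 8*t - t^2) / (2*(1-t^2))"
  using dens2[OF assms] by (simp add: divide_simps) (simp add: algebra_simps power2_eq_square power3_eq_cube power4_eq_xxxx)
lemma idB3:
  fixes t :: real assumes "0 \<le> t" "t \<le> 2/5"
  shows "1/(1+t) - 2*t/(1-t^2) - 1/2 = (t^2 - 6*t + 1) / (2*(1-t^2))"
  using dens2[OF assms] by (simp add: divide_simps) (simp add: algebra_simps power2_eq_square power3_eq_cube power4_eq_xxxx)

lemma idC1:
  fixes t :: real assumes "0 \<le> t" "t \<le> 2/5"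
  shows "(1-t^2)/(1+t^2) - 2*t/(1-t^2) - 2*t/(1-t^2) - 1/2 = (3*t^4 - 8*t^3 - 4*t^2 - 8*t + 1) / (2*(1+t^2)*(1-t^2))"
  using dens2[OF assms] by (simp add: divide_simps) (simp add: algebra_simps power2_eq_square power3_eq_cube power4_eq_xxxx)
lemma idC2:
  fixes t :: real assumes "0 \<le> t" "t \<le> 2/5"
  shows "(1-t^2)/(1+t^2) - 2*t/(1-t^2) - t/(1-t) - 1/2 = (t^4 - 6*t^3 - 6*t^2 - 6*t + 1) / (2*(1+t^2)*(1-t^2))"
  using dens2[OF assms] by (simp add: divide_simps) (simp add: algebra_simps power2_eq_square power3_eq_cube power4_eq_xxxx)
lemma idC3:
  fixes t :: real assumes "0 \<le> t" "t \<le> 2/5"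
  shows "(1-t^2)/(1+t^2) - 2*t/(1-t^2) - 1/2 = (3*t^4 - 4*t^3 - 4*t^2 - 4*t + 1) / (2*(1+t^2)*(1-t^2))"
  using dens2[OF assms] by (simp add: divide_simps) (simp add: algebra_simps power2_eq_square power3_eq_cube power4_eq_xxxx)

lemma idD1:
  fixes t :: real assumes "0 \<le> t" "t \<le> 2/5"
  shows "(1-t)/(1+t) - 2*t/(1-t^2) - 2*t/(1-t^2) - 1/2 = (3*t^2 - 12*t + 1) / (2*(1-t^2))"
  using dens2[OF assms] by (simp add: divide_simps) (simp add: algebra_simps power2_eq_square power3_eq_cube power4_eq_xxxx)
lemma idD2:
  fixes t :: real assumes "0 \<le> t" "t \<le> 2/5"
  shows "(1-t)/(1+t) - 2*t/(1-t^2) - t/(1-t) - 1/2 = (t^2 - 10*t + 1) / (2*(1-t^2))"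
  using dens2[OF assms] by (simp add: divide_simps) (simp add: algebra_simps power2_eq_square power3_eq_cube power4_eq_xxxx)
lemma idD3:
  fixes t :: real assumes "0 \<le> t" "t \<le> 2/5"
  shows "(1-t)/(1+t) - 2*t/(1-t^2) - 1/2 = (3*t^2 - 8*t + 1) / (2*(1-t^2))"
  using dens2[OF assms] by (simp add: divide_simps) (simp add: algebra_simps power2_eq_square power3_eq_cube power4_eq_xxxx)

lemma idE1:
  fixes t :: real assumes "0 \<le> t" "t \<le> 2/5"
  shows "(2-2*t)/(2-t) - 2*t/(1-t^2) - 2*t/(1-t^2) - 1/2 = (3*t^3 + 6*t^2 - 19*t + 2) / (2*(2-t)*(1-t^2))"
  using dens2[OF assms] by (simp add: divide_simps) (simp add: algebra_simps power2_eq_square power3_eq_cube power4_eq_xxxx)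
lemma idE2:
  fixes t :: real assumes "0 \<le> t" "t \<le> 2/5"
  shows "(2-2*t)/(2-t) - 2*t/(1-t^2) - t/(1-t) - 1/2 = (5*t^3 - 15*t + 2) / (2*(2-t)*(1-t^2))"
  using dens2[OF assms] by (simp add: divide_simps) (simp add: algebra_simps power2_eq_square power3_eq_cube power4_eq_xxxx)
lemma idE3:
  fixes t :: real assumes "0 \<le> t" "t \<le> 2/5"
  shows "(2-2*t)/(2-t) - 2*t/(1-t^2) - 1/2 = (3*t^3 + 2*t^2 - 11*t + 2) / (2*(2-t)*(1-t^2))"
  using dens2[OF assms] by (simp add: divide_simps) (simp add: algebra_simps power2_eq_square power3_eq_cube power4_eq_xxxx)

lemma half_of_ident: "(M::real) - 1/2 = P / D \<Longrightarrow> P = 0 \<Longrightarrow> M = 1/2" by simp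

lemma sq17: "sqrt 17 * sqrt 17 = (17::real)" by simp
lemma sq3: "sqrt 3 * sqrt 3 = (3::real)" by simp
lemma sq5: "sqrt 5 * sqrt 5 = (5::real)" by simp
lemma sq6: "sqrt 6 * sqrt 6 = (6::real)" by simp
lemma sq2: "sqrt 2 * sqrt 2 = (2::real)" by simp
lemma sq33: "sqrt 33 * sqrt 33 = (33::real)" by simp
lemma sq13: "sqrt 13 * sqrt 13 = (13::real)" by simp

lemma r17: "1 / (4 + sqrt 17) = sqrt 17 - (4::real)"
proof -
  have p: "4 + sqrt 17 > (0::real)" by (simp add: add_pos_nonneg)
  have "(sqrt 17 - 4) * (4 + sqrt 17) = (1::real)" by (simp add: algebra_simps sq17)
  then show ?thesis using p by (simp add: field_simps)
qed

lemma r3: "1 / (3 + 2 * sqrt 3) = (2 * sqrt 3 - 3) / (3::real)"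
proof -
  have p: "3 + 2 * sqrt 3 > (0::real)" by (simp add: add_pos_nonneg)
  have "(2 * sqrt 3 - 3) * (3 + 2 * sqrt 3) = (3::real)" by (simp add: algebra_simps sq3)
  then show ?thesis using p by (simp add: field_simps)
qed

lemma r5: "1 / (2 + sqrt 5) = sqrt 5 - (2::real)"
proof -
  have p: "2 + sqrt 5 > (0::real)" by (simp add: add_pos_nonneg)
  have "(sqrt 5 - 2) * (2 + sqrt 5) = (1::real)" by (simp add: algebra_simps sq5)
  then show ?thesis using p by (simp add: field_simps)
qed

lemma b17: "4 < sqrt (17::real)" "sqrt (17::real) \<le> 4 + 2/5"
  by (rule real_less_rsqrt, simp, rule real_le_lsqrt, simp_all add: power2_eq_square)
lemma b3: "3/2 < sqrt (3::real)" "sqrt (3::real) \<le> 2"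
  by (rule real_less_rsqrt, simp add: power2_eq_square, rule real_le_lsqrt, simp_all add: power2_eq_square)
lemma b5: "2 < sqrt (5::real)" "sqrt (5::real) \<le> 9/4"
  by (rule real_less_rsqrt, simp, rule real_le_lsqrt, simp_all add: power2_eq_square)
lemma b6: "23/10 \<le> sqrt (6::real)" "sqrt (6::real) < 5/2"
  by (rule real_le_rsqrt, simp add: power2_eq_square, rule real_less_lsqrt, simp_all add: power2_eq_square)
lemma b2: "13/10 \<le> sqrt (2::real)" "sqrt (2::real) < 3/2"
  by (rule real_le_rsqrt, simp add: power2_eq_square, rule real_less_lsqrt, simp_all add: power2_eq_square)
lemma b33: "24/5 \<le> sqrt (33::real)" "sqrt (33::real) < 6"
  by (rule real_le_rsqrt, simp add: power2_eq_square, rule real_less_lsqrt, simp_all add: power2_eq_square)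
lemma b13: "14/5 \<le> sqrt (13::real)" "sqrt (13::real) < 4"
  by (rule real_le_rsqrt, simp add: power2_eq_square, rule real_less_lsqrt, simp_all add: power2_eq_square)

lemma partA: "car_radius (F1 (\<lambda>z. z)) = 1 / (4 + sqrt 17) \<and>
    car_radius (F2 (\<lambda>z. z)) = 1 / (3 + 2 * sqrt 3) \<and>
    car_radius (F3 (\<lambda>z. z)) = 1 / (2 + sqrt 5)"
proof (intro conjI)
  define R where "R = sqrt 17 - (4::real)"
  have R: "0 < R" "R \<le> 2/5" using b17 by (simp_all add: R_def)
  have "1 - 8*R - R^2 = 0" by (simp add: R_def power2_eq_square algebra_simps sq17)
  from half_of_ident[OF idA1[OF less_imp_le[OF R(1)] R(2)] this]
  have "car_radius (F1 (\<lambda>z. z)) = R" by (rule caseA(1)[OF R])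
  then show "car_radius (F1 (\<lambda>z. z)) = 1 / (4 + sqrt 17)" by (simp add: r17 R_def)
next
  define R where "R = (2 * sqrt 3 - 3) / (3::real)"
  have R: "0 < R" "R \<le> 2/5" using b3 by (simp_all add: R_def)
  have "1 - 6*R - 3*R^2 = 0" by (simp add: R_def power2_eq_square algebra_simps sq3 field_simps)
  from half_of_ident[OF idA2[OF less_imp_le[OF R(1)] R(2)] this]
  have "car_radius (F2 (\<lambda>z. z)) = R" by (rule caseA(2)[OF R])
  then show "car_radius (F2 (\<lambda>z. z)) = 1 / (3 + 2 * sqrt 3)" by (simp add: r3 R_def)
next
  define R where "R = sqrt 5 - (2::real)"
  have R: "0 < R" "R \<le> 2/5" using b5 by (simp_all add: R_def)
  have "1 - 4*R - R^2 = 0" by (simp add: R_def power2_eq_square algebra_simps sq5)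
  from half_of_ident[OF idA3[OF less_imp_le[OF R(1)] R(2)] this]
  have "car_radius (F3 (\<lambda>z. z)) = R" by (rule caseA(3)[OF R])
  then show "car_radius (F3 (\<lambda>z. z)) = 1 / (2 + sqrt 5)" by (simp add: r5 R_def)
qed

lemma partB: "car_radius (F1 (\<lambda>z. z / (1 + z))) = 5 - 2 * sqrt 6 \<and>
    car_radius (F2 (\<lambda>z. z / (1 + z))) = sqrt 17 - 4 \<and>
    car_radius (F3 (\<lambda>z. z / (1 + z))) = 3 - 2 * sqrt 2"
proof (intro conjI)
  define R where "R = 5 - 2 * sqrt (6::real)"
  have R: "0 < R" "R \<le> 2/5" using b6 by (simp_all add: R_def)
  have "R^2 - 10*R + 1 = 0" by (simp add: R_def power2_eq_square algebra_simps sq6)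
  from half_of_ident[OF idB1[OF less_imp_le[OF R(1)] R(2)] this]
  have "car_radius (F1 (\<lambda>z. z / (1 + z))) = R" by (rule caseB(1)[OF R])
  then show "car_radius (F1 (\<lambda>z. z / (1 + z))) = 5 - 2 * sqrt 6" by (simp add: R_def)
next
  define R where "R = sqrt 17 - (4::real)"
  have R: "0 < R" "R \<le> 2/5" using b17 by (simp_all add: R_def)
  have "1 - 8*R - R^2 = 0" by (simp add: R_def power2_eq_square algebra_simps sq17)
  from half_of_ident[OF idB2[OF less_imp_le[OF R(1)] R(2)] this]
  have "car_radius (F2 (\<lambda>z. z / (1 + z))) = R" by (rule caseB(2)[OF R])
  then show "car_radius (F2 (\<lambda>z. z / (1 + z))) = sqrt 17 - 4" by (simp add: R_def)
next
  define R where "R = 3 - 2 * sqrt (2::real)"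
  have R: "0 < R" "R \<le> 2/5" using b2 by (simp_all add: R_def)
  have "R^2 - 6*R + 1 = 0" by (simp add: R_def power2_eq_square algebra_simps sq2)
  from half_of_ident[OF idB3[OF less_imp_le[OF R(1)] R(2)] this]
  have "car_radius (F3 (\<lambda>z. z / (1 + z))) = R" by (rule caseB(3)[OF R])
  then show "car_radius (F3 (\<lambda>z. z / (1 + z))) = 3 - 2 * sqrt 2" by (simp add: R_def)
qed

lemma partD: "car_radius (F1 (\<lambda>z. z / (1 - z)^2)) = (6 - sqrt 33) / 3 \<and>
    car_radius (F2 (\<lambda>z. z / (1 - z)^2)) = 5 - 2 * sqrt 6 \<and>
    car_radius (F3 (\<lambda>z. z / (1 - z)^2)) = (4 - sqrt 13) / 3"
proof (intro conjI)
  define R where "R = (6 - sqrt (33::real)) / 3"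
  have R: "0 < R" "R \<le> 2/5" using b33 by (simp_all add: R_def)
  have "3*R^2 - 12*R + 1 = 0" by (simp add: R_def power2_eq_square field_simps sq33)
  from half_of_ident[OF idD1[OF less_imp_le[OF R(1)] R(2)] this]
  have "car_radius (F1 (\<lambda>z. z / (1 - z)^2)) = R" by (rule caseD(1)[OF R])
  then show "car_radius (F1 (\<lambda>z. z / (1 - z)^2)) = (6 - sqrt 33) / 3" by (simp add: R_def)
next
  define R where "R = 5 - 2 * sqrt (6::real)"
  have R: "0 < R" "R \<le> 2/5" using b6 by (simp_all add: R_def)
  have "R^2 - 10*R + 1 = 0" by (simp add: R_def power2_eq_square algebra_simps sq6)
  from half_of_ident[OF idD2[OF less_imp_le[OF R(1)] R(2)] this]
  have "car_radius (F2 (\<lambda>z. z / (1 - z)^2)) = R" by (rule caseD(2)[OF R])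
  then show "car_radius (F2 (\<lambda>z. z / (1 - z)^2)) = 5 - 2 * sqrt 6" by (simp add: R_def)
next
  define R where "R = (4 - sqrt (13::real)) / 3"
  have R: "0 < R" "R \<le> 2/5" using b13 by (simp_all add: R_def)
  have "3*R^2 - 8*R + 1 = 0" by (simp add: R_def power2_eq_square field_simps sq13)
  from half_of_ident[OF idD3[OF less_imp_le[OF R(1)] R(2)] this]
  have "car_radius (F3 (\<lambda>z. z / (1 - z)^2)) = R" by (rule caseD(3)[OF R])
  then show "car_radius (F3 (\<lambda>z. z / (1 - z)^2)) = (4 - sqrt 13) / 3" by (simp add: R_def)
qed

lemma poly_root:
  fixes P :: "real \<Rightarrow> real"
  assumes c: "continuous_on {0..1/4} P" and p0: "P 0 > 0" and pb: "P (1/4) < 0"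
  obtains R where "0 < R" "R \<le> 1/4" "P R = 0"
proof -
  obtain x where x: "0 \<le> x" "x \<le> 1/4" "P x = 0"
    using IVT2'[of P "1/4" 0 0] c p0 pb by auto
  have "x \<noteq> 0" using x p0 by auto
  then show ?thesis by (intro that[of x]) (use x in auto)
qed

lemma noroot:
  fixes M P D :: "real \<Rightarrow> real"
  assumes ident: "\<And>t. 0 \<le> t \<Longrightarrow> t \<le> 2/5 \<Longrightarrow> M t - 1/2 = P t / D t"
    and gt: "\<And>s. 0 < s \<Longrightarrow> s < R \<Longrightarrow> M s > 1/2"
    and R: "R \<le> 2/5"
  shows "\<forall>s. 0 < s \<and> s < R \<longrightarrow> P s \<noteq> 0"
proof (intro allI impI)
  fix s assume s: "0 < s \<and> s < R"
  show "P s \<noteq> 0"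
  proof
    assume "P s = 0"
    then have "M s - 1/2 = 0" using ident[of s] s R by simp
    with gt[of s] s show False by simp
  qed
qed

lemma LantiC: "0 \<le> s \<Longrightarrow> s \<le> t \<Longrightarrow> (1 - t^2) / (1 + t^2) \<le> (1 - s^2) / (1 + (s::real)^2)"
proof -
  assume that: "0 \<le> s" "s \<le> t"
  have e: "(1 - x^2) / (1 + x^2) = 2 / (1 + x^2) - 1" for x :: real
  proof -
    have "1 + x^2 > 0" by (simp add: add_pos_nonneg)
    then show ?thesis by (simp add: field_simps)
  qed
  have "s^2 \<le> t^2" using power_mono[OF that(2) that(1), of 2] .
  then have "2 / (1 + t^2) \<le> 2 / (1 + s^2)" by (intro divide_left_mono) (auto simp: add_pos_nonneg)
  then show ?thesis by (simp add: e)
qed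

lemma LantiE: "0 \<le> s \<Longrightarrow> s \<le> t \<Longrightarrow> t \<le> 2/5 \<Longrightarrow> (2 - 2 * t) / (2 - t) \<le> (2 - 2 * s) / (2 - (s::real))"
proof -
  assume that: "0 \<le> s" "s \<le> t" "t \<le> 2/5"
  have e: "(2 - 2 * x) / (2 - x) = 2 - 2 / (2 - x)" if "x \<le> 2/5" for x :: real
    using that by (simp add: field_simps)
  have "2 / (2 - s) \<le> 2 / (2 - t)" using that by (intro divide_left_mono) auto
  then show ?thesis using that by (simp add: e)
qed

lemma partC1: "\<exists>R. car_radius (F1 (\<lambda>z. z / (1 - z^2))) = R \<and> 0 < R \<and> R \<le> 1/4 \<and> (\<lambda>r::real. 3*r^4 - 8*r^3 - 4*r^2 - 8*r + 1) R = 0 \<and>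
   (\<forall>s. 0 < s \<and> s < R \<longrightarrow> (\<lambda>r::real. 3*r^4 - 8*r^3 - 4*r^2 - 8*r + 1) s \<noteq> 0)"
proof -
  obtain R :: real where R0: "0 < R" and R4: "R \<le> 1/4" and pR: "3*R^4 - 8*R^3 - 4*R^2 - 8*R + 1 = 0"
    by (rule poly_root[of "\<lambda>r. 3*r^4 - 8*r^3 - 4*r^2 - 8*r + 1"]) (auto intro!: continuous_intros simp: power_divide)
  have R25: "R \<le> 2/5" using R4 by simp
  have eq: "(1-R^2)/(1+R^2) - 2*R/(1-R^2) - 2*R/(1-R^2) = 1/2"
    by (rule half_of_ident[OF idC1[OF less_imp_le[OF R0] R25] pR])
  have cr: "car_radius (F1 (\<lambda>z. z / (1 - z^2))) = R" by (rule caseC(1)[OF R0 R25 eq])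
  have "\<forall>s. 0 < s \<and> s < R \<longrightarrow> 3* s^4 - 8* s^3 - 4* s^2 - 8* s + 1 \<noteq> 0"
  proof (rule noroot[OF idC1 _ R25])
    fix s :: real assume s: "0 < s" "s < R"
    have "(1-R^2)/(1+R^2) \<le> (1-s^2)/(1+s^2)" using LantiC[of s R] s by simp
    moreover have "2* s/(1-s^2) < 2*R/(1-R^2)" using mono_2t[of s R] s R25 by simp
    ultimately show "(1-s^2)/(1+s^2) - 2* s/(1-s^2) - 2* s/(1-s^2) > 1/2" using eq by linarith
  qed
  then show ?thesis using cr R0 R4 pR by auto
qed

lemma partC2: "\<exists>R. car_radius (F2 (\<lambda>z. z / (1 - z^2))) = R \<and> 0 < R \<and> R \<le> 1/4 \<and> (\<lambda>r::real. r^4 - 6*r^3 - 6*r^2 - 6*r + 1) R = 0 \<and>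
   (\<forall>s. 0 < s \<and> s < R \<longrightarrow> (\<lambda>r::real. r^4 - 6*r^3 - 6*r^2 - 6*r + 1) s \<noteq> 0)"
proof -
  obtain R :: real where R0: "0 < R" and R4: "R \<le> 1/4" and pR: "R^4 - 6*R^3 - 6*R^2 - 6*R + 1 = 0"
    by (rule poly_root[of "\<lambda>r. r^4 - 6*r^3 - 6*r^2 - 6*r + 1"]) (auto intro!: continuous_intros simp: power_divide)
  have R25: "R \<le> 2/5" using R4 by simp
  have eq: "(1-R^2)/(1+R^2) - 2*R/(1-R^2) - R/(1-R) = 1/2"
    by (rule half_of_ident[OF idC2[OF less_imp_le[OF R0] R25] pR])
  have cr: "car_radius (F2 (\<lambda>z. z / (1 - z^2))) = R" by (rule caseC(2)[OF R0 R25 eq])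
  have "\<forall>s. 0 < s \<and> s < R \<longrightarrow> s^4 - 6* s^3 - 6* s^2 - 6* s + 1 \<noteq> 0"
  proof (rule noroot[OF idC2 _ R25])
    fix s :: real assume s: "0 < s" "s < R"
    have "(1-R^2)/(1+R^2) \<le> (1-s^2)/(1+s^2)" using LantiC[of s R] s by simp
    moreover have "2* s/(1-s^2) < 2*R/(1-R^2)" using mono_2t[of s R] s R25 by simp
    moreover have "s/(1-s) < R/(1-R)" using mono_t1[of s R] s R25 by simp
    ultimately show "(1-s^2)/(1+s^2) - 2* s/(1-s^2) - s/(1-s) > 1/2" using eq by linarith
  qed
  then show ?thesis using cr R0 R4 pR by auto
qed

lemma partC3: "\<exists>R. car_radius (F3 (\<lambda>z. z / (1 - z^2))) = R \<and> 0 < R \<and> R \<le> 1/4 \<and> (\<lambda>r::real. 3*r^4 - 4*r^3 - 4*r^2 - 4*r + 1) R = 0 \<and>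
   (\<forall>s. 0 < s \<and> s < R \<longrightarrow> (\<lambda>r::real. 3*r^4 - 4*r^3 - 4*r^2 - 4*r + 1) s \<noteq> 0)"
proof -
  obtain R :: real where R0: "0 < R" and R4: "R \<le> 1/4" and pR: "3*R^4 - 4*R^3 - 4*R^2 - 4*R + 1 = 0"
    by (rule poly_root[of "\<lambda>r. 3*r^4 - 4*r^3 - 4*r^2 - 4*r + 1"]) (auto intro!: continuous_intros simp: power_divide)
  have R25: "R \<le> 2/5" using R4 by simp
  have eq: "(1-R^2)/(1+R^2) - 2*R/(1-R^2) = 1/2"
    by (rule half_of_ident[OF idC3[OF less_imp_le[OF R0] R25] pR])
  have cr: "car_radius (F3 (\<lambda>z. z / (1 - z^2))) = R" by (rule caseC(3)[OF R0 R25 eq])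
  have "\<forall>s. 0 < s \<and> s < R \<longrightarrow> 3* s^4 - 4* s^3 - 4* s^2 - 4* s + 1 \<noteq> 0"
  proof (rule noroot[OF idC3 _ R25])
    fix s :: real assume s: "0 < s" "s < R"
    have "(1-R^2)/(1+R^2) \<le> (1-s^2)/(1+s^2)" using LantiC[of s R] s by simp
    moreover have "2* s/(1-s^2) < 2*R/(1-R^2)" using mono_2t[of s R] s R25 by simp
    ultimately show "(1-s^2)/(1+s^2) - 2* s/(1-s^2) > 1/2" using eq by linarith
  qed
  then show ?thesis using cr R0 R4 pR by auto
qed

lemma partE1: "\<exists>R. car_radius (F1 (\<lambda>z. z + z^2 / 2)) = R \<and> 0 < R \<and> R \<le> 1/4 \<and> (\<lambda>r::real. 3*r^3 + 6*r^2 - 19*r + 2) R = 0 \<and>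
   (\<forall>s. 0 < s \<and> s < R \<longrightarrow> (\<lambda>r::real. 3*r^3 + 6*r^2 - 19*r + 2) s \<noteq> 0)"
proof -
  obtain R :: real where R0: "0 < R" and R4: "R \<le> 1/4" and pR: "3*R^3 + 6*R^2 - 19*R + 2 = 0"
    by (rule poly_root[of "\<lambda>r. 3*r^3 + 6*r^2 - 19*r + 2"]) (auto intro!: continuous_intros simp: power_divide)
  have R25: "R \<le> 2/5" using R4 by simp
  have eq: "(2-2*R)/(2-R) - 2*R/(1-R^2) - 2*R/(1-R^2) = 1/2"
    by (rule half_of_ident[OF idE1[OF less_imp_le[OF R0] R25] pR])
  have cr: "car_radius (F1 (\<lambda>z. z + z^2 / 2)) = R" by (rule caseE(1)[OF R0 R25 eq])
  have "\<forall>s. 0 < s \<and> s < R \<longrightarrow> 3* s^3 + 6* s^2 - 19* s + 2 \<noteq> 0"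
  proof (rule noroot[OF idE1 _ R25])
    fix s :: real assume s: "0 < s" "s < R"
    have "(2-2*R)/(2-R) \<le> (2-2* s)/(2-s)" using LantiE[of s R] s R25 by simp
    moreover have "2* s/(1-s^2) < 2*R/(1-R^2)" using mono_2t[of s R] s R25 by simp
    ultimately show "(2-2* s)/(2-s) - 2* s/(1-s^2) - 2* s/(1-s^2) > 1/2" using eq by linarith
  qed
  then show ?thesis using cr R0 R4 pR by auto
qed

lemma partE2: "\<exists>R. car_radius (F2 (\<lambda>z. z + z^2 / 2)) = R \<and> 0 < R \<and> R \<le> 1/4 \<and> (\<lambda>r::real. 5*r^3 - 15*r + 2) R = 0 \<and>
   (\<forall>s. 0 < s \<and> s < R \<longrightarrow> (\<lambda>r::real. 5*r^3 - 15*r + 2) s \<noteq> 0)"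
proof -
  obtain R :: real where R0: "0 < R" and R4: "R \<le> 1/4" and pR: "5*R^3 - 15*R + 2 = 0"
    by (rule poly_root[of "\<lambda>r. 5*r^3 - 15*r + 2"]) (auto intro!: continuous_intros simp: power_divide)
  have R25: "R \<le> 2/5" using R4 by simp
  have eq: "(2-2*R)/(2-R) - 2*R/(1-R^2) - R/(1-R) = 1/2"
    by (rule half_of_ident[OF idE2[OF less_imp_le[OF R0] R25] pR])
  have cr: "car_radius (F2 (\<lambda>z. z + z^2 / 2)) = R" by (rule caseE(2)[OF R0 R25 eq])
  have "\<forall>s. 0 < s \<and> s < R \<longrightarrow> 5* s^3 - 15* s + 2 \<noteq> 0"
  proof (rule noroot[OF idE2 _ R25])
    fix s :: real assume s: "0 < s" "s < R"
    have "(2-2*R)/(2-R) \<le> (2-2* s)/(2-s)" using LantiE[of s R] s R25 by simp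
    moreover have "2* s/(1-s^2) < 2*R/(1-R^2)" using mono_2t[of s R] s R25 by simp
    moreover have "s/(1-s) < R/(1-R)" using mono_t1[of s R] s R25 by simp
    ultimately show "(2-2* s)/(2-s) - 2* s/(1-s^2) - s/(1-s) > 1/2" using eq by linarith
  qed
  then show ?thesis using cr R0 R4 pR by auto
qed

lemma partE3: "\<exists>R. car_radius (F3 (\<lambda>z. z + z^2 / 2)) = R \<and> 0 < R \<and> R \<le> 1/4 \<and> (\<lambda>r::real. 3*r^3 + 2*r^2 - 11*r + 2) R = 0 \<and>
   (\<forall>s. 0 < s \<and> s < R \<longrightarrow> (\<lambda>r::real. 3*r^3 + 2*r^2 - 11*r + 2) s \<noteq> 0)"
proof -
  obtain R :: real where R0: "0 < R" and R4: "R \<le> 1/4" and pR: "3*R^3 + 2*R^2 - 11*R + 2 = 0"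
    by (rule poly_root[of "\<lambda>r. 3*r^3 + 2*r^2 - 11*r + 2"]) (auto intro!: continuous_intros simp: power_divide)
  have R25: "R \<le> 2/5" using R4 by simp
  have eq: "(2-2*R)/(2-R) - 2*R/(1-R^2) = 1/2"
    by (rule half_of_ident[OF idE3[OF less_imp_le[OF R0] R25] pR])
  have cr: "car_radius (F3 (\<lambda>z. z + z^2 / 2)) = R" by (rule caseE(3)[OF R0 R25 eq])
  have "\<forall>s. 0 < s \<and> s < R \<longrightarrow> 3* s^3 + 2* s^2 - 11* s + 2 \<noteq> 0"
  proof (rule noroot[OF idE3 _ R25])
    fix s :: real assume s: "0 < s" "s < R"
    have "(2-2*R)/(2-R) \<le> (2-2* s)/(2-s)" using LantiE[of s R] s R25 by simp
    moreover have "2* s/(1-s^2) < 2*R/(1-R^2)" using mono_2t[of s R] s R25 by simp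
    ultimately show "(2-2* s)/(2-s) - 2* s/(1-s^2) > 1/2" using eq by linarith
  qed
  then show ?thesis using cr R0 R4 pR by auto
qed

lemma partC: "let R1 = car_radius (F1 (\<lambda>z. z / (1 - z^2)));
        R2 = car_radius (F2 (\<lambda>z. z / (1 - z^2)));
        R3 = car_radius (F3 (\<lambda>z. z / (1 - z^2)));
        p1 = (\<lambda>r::real. 3*r^4 - 8*r^3 - 4*r^2 - 8*r + 1);
        p2 = (\<lambda>r::real. r^4 - 6*r^3 - 6*r^2 - 6*r + 1);
        p3 = (\<lambda>r::real. 3*r^4 - 4*r^3 - 4*r^2 - 4*r + 1)
    in (0 < R1 \<and> R1 < 1 \<and> p1 R1 = 0 \<and> (\<forall>s. 0 < s \<and> s < R1 \<longrightarrow> p1 s \<noteq> 0)) \<and>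
       (0 < R2 \<and> R2 < 1 \<and> p2 R2 = 0 \<and> (\<forall>s. 0 < s \<and> s < R2 \<longrightarrow> p2 s \<noteq> 0)) \<and>
       (0 < R3 \<and> R3 < 1 \<and> p3 R3 = 0 \<and> (\<forall>s. 0 < s \<and> s < R3 \<longrightarrow> p3 s \<noteq> 0))"
proof -
  obtain R1 where 1: "car_radius (F1 (\<lambda>z. z / (1 - z^2))) = R1" "0 < R1" "R1 \<le> 1/4"
     "(\<lambda>r::real. 3*r^4 - 8*r^3 - 4*r^2 - 8*r + 1) R1 = 0"
     "\<forall>s. 0 < s \<and> s < R1 \<longrightarrow> (\<lambda>r::real. 3*r^4 - 8*r^3 - 4*r^2 - 8*r + 1) s \<noteq> 0"
    using partC1 by blast
  obtain R2 where 2: "car_radius (F2 (\<lambda>z. z / (1 - z^2))) = R2" "0 < R2" "R2 \<le> 1/4"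
     "(\<lambda>r::real. r^4 - 6*r^3 - 6*r^2 - 6*r + 1) R2 = 0"
     "\<forall>s. 0 < s \<and> s < R2 \<longrightarrow> (\<lambda>r::real. r^4 - 6*r^3 - 6*r^2 - 6*r + 1) s \<noteq> 0"
    using partC2 by blast
  obtain R3 where 3: "car_radius (F3 (\<lambda>z. z / (1 - z^2))) = R3" "0 < R3" "R3 \<le> 1/4"
     "(\<lambda>r::real. 3*r^4 - 4*r^3 - 4*r^2 - 4*r + 1) R3 = 0"
     "\<forall>s. 0 < s \<and> s < R3 \<longrightarrow> (\<lambda>r::real. 3*r^4 - 4*r^3 - 4*r^2 - 4*r + 1) s \<noteq> 0"
    using partC3 by blast
  show ?thesis unfolding Let_def 1(1) 2(1) 3(1) using 1(2-5) 2(2-5) 3(2-5) by simp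
qed

lemma partE: "let S1 = car_radius (F1 (\<lambda>z. z + z^2 / 2));
        S2 = car_radius (F2 (\<lambda>z. z + z^2 / 2));
        S3 = car_radius (F3 (\<lambda>z. z + z^2 / 2));
        q1 = (\<lambda>r::real. 3*r^3 + 6*r^2 - 19*r + 2);
        q2 = (\<lambda>r::real. 5*r^3 - 15*r + 2);
        q3 = (\<lambda>r::real. 3*r^3 + 2*r^2 - 11*r + 2)
    in (0 < S1 \<and> S1 < 1 \<and> q1 S1 = 0 \<and> (\<forall>s. 0 < s \<and> s < S1 \<longrightarrow> q1 s \<noteq> 0)) \<and>
       (0 < S2 \<and> S2 < 1 \<and> q2 S2 = 0 \<and> (\<forall>s. 0 < s \<and> s < S2 \<longrightarrow> q2 s \<noteq> 0)) \<and>
       (0 < S3 \<and> S3 < 1 \<and> q3 S3 = 0 \<and> (\<forall>s. 0 < s \<and> s < S3 \<longrightarrow> q3 s \<noteq> 0))"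
proof -
  obtain R1 where 1: "car_radius (F1 (\<lambda>z. z + z^2 / 2)) = R1" "0 < R1" "R1 \<le> 1/4"
     "(\<lambda>r::real. 3*r^3 + 6*r^2 - 19*r + 2) R1 = 0"
     "\<forall>s. 0 < s \<and> s < R1 \<longrightarrow> (\<lambda>r::real. 3*r^3 + 6*r^2 - 19*r + 2) s \<noteq> 0"
    using partE1 by blast
  obtain R2 where 2: "car_radius (F2 (\<lambda>z. z + z^2 / 2)) = R2" "0 < R2" "R2 \<le> 1/4"
     "(\<lambda>r::real. 5*r^3 - 15*r + 2) R2 = 0"
     "\<forall>s. 0 < s \<and> s < R2 \<longrightarrow> (\<lambda>r::real. 5*r^3 - 15*r + 2) s \<noteq> 0"
    using partE2 by blast
  obtain R3 where 3: "car_radius (F3 (\<lambda>z. z + z^2 / 2)) = R3" "0 < R3" "R3 \<le> 1/4"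
     "(\<lambda>r::real. 3*r^3 + 2*r^2 - 11*r + 2) R3 = 0"
     "\<forall>s. 0 < s \<and> s < R3 \<longrightarrow> (\<lambda>r::real. 3*r^3 + 2*r^2 - 11*r + 2) s \<noteq> 0"
    using partE3 by blast
  show ?thesis unfolding Let_def 1(1) 2(1) 3(1) using 1(2-5) 2(2-5) 3(2-5) by simp
qed

theorem theorem6p1:
  shows
  "(car_radius (F1 (\<lambda>z. z)) = 1 / (4 + sqrt 17) \<and>
    car_radius (F2 (\<lambda>z. z)) = 1 / (3 + 2 * sqrt 3) \<and>
    car_radius (F3 (\<lambda>z. z)) = 1 / (2 + sqrt 5))
 \<and> (car_radius (F1 (\<lambda>z. z / (1 + z))) = 5 - 2 * sqrt 6 \<and>
    car_radius (F2 (\<lambda>z. z / (1 + z))) = sqrt 17 - 4 \<and>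
    car_radius (F3 (\<lambda>z. z / (1 + z))) = 3 - 2 * sqrt 2)
 \<and> (let R1 = car_radius (F1 (\<lambda>z. z / (1 - z^2)));
        R2 = car_radius (F2 (\<lambda>z. z / (1 - z^2)));
        R3 = car_radius (F3 (\<lambda>z. z / (1 - z^2)));
        p1 = (\<lambda>r::real. 3*r^4 - 8*r^3 - 4*r^2 - 8*r + 1);
        p2 = (\<lambda>r::real. r^4 - 6*r^3 - 6*r^2 - 6*r + 1);
        p3 = (\<lambda>r::real. 3*r^4 - 4*r^3 - 4*r^2 - 4*r + 1)
    in (0 < R1 \<and> R1 < 1 \<and> p1 R1 = 0 \<and> (\<forall>s. 0 < s \<and> s < R1 \<longrightarrow> p1 s \<noteq> 0)) \<and>
       (0 < R2 \<and> R2 < 1 \<and> p2 R2 = 0 \<and> (\<forall>s. 0 < s \<and> s < R2 \<longrightarrow> p2 s \<noteq> 0)) \<and>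
       (0 < R3 \<and> R3 < 1 \<and> p3 R3 = 0 \<and> (\<forall>s. 0 < s \<and> s < R3 \<longrightarrow> p3 s \<noteq> 0)))
 \<and> (car_radius (F1 (\<lambda>z. z / (1 - z)^2)) = (6 - sqrt 33) / 3 \<and>
    car_radius (F2 (\<lambda>z. z / (1 - z)^2)) = 5 - 2 * sqrt 6 \<and>
    car_radius (F3 (\<lambda>z. z / (1 - z)^2)) = (4 - sqrt 13) / 3)
 \<and> (let S1 = car_radius (F1 (\<lambda>z. z + z^2 / 2));
        S2 = car_radius (F2 (\<lambda>z. z + z^2 / 2));
        S3 = car_radius (F3 (\<lambda>z. z + z^2 / 2));
        q1 = (\<lambda>r::real. 3*r^3 + 6*r^2 - 19*r + 2);
        q2 = (\<lambda>r::real. 5*r^3 - 15*r + 2);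
        q3 = (\<lambda>r::real. 3*r^3 + 2*r^2 - 11*r + 2)
    in (0 < S1 \<and> S1 < 1 \<and> q1 S1 = 0 \<and> (\<forall>s. 0 < s \<and> s < S1 \<longrightarrow> q1 s \<noteq> 0)) \<and>
       (0 < S2 \<and> S2 < 1 \<and> q2 S2 = 0 \<and> (\<forall>s. 0 < s \<and> s < S2 \<longrightarrow> q2 s \<noteq> 0)) \<and>
       (0 < S3 \<and> S3 < 1 \<and> q3 S3 = 0 \<and> (\<forall>s. 0 < s \<and> s < S3 \<longrightarrow> q3 s \<noteq> 0)))"
  by (rule conjI[OF partA conjI[OF partB conjI[OF partC conjI[OF partD partE]]]])

end
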